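(* Let $(u,\phi,\theta,\eta)$ be a solution of the system $\rho u_{tt}=\mu u_{xx}+b\phi_x$, $J\phi_{tt}=\alpha\phi_{xx}-bu_x-\xi\phi-\beta\theta_x$, $c\theta_t=-\beta\phi_{xt}+\int_0^\infty\kappa(s)\eta_{xx}(x,s)ds$, $\eta_t=\theta-\eta_s$ on $(0,\pi)\times(0,\infty)$ with boundary conditions $u=\phi_x=\theta=0$ at $x=0,\pi$, $\eta(0,s)=\eta(\pi,s)=0$, $\eta(x,0)=0$. Then the functional \[ F_1(t)=-\frac{2c}{g(0)}\int_0^{+\infty}\kappa(s)\langle\theta(t),\eta^t(s)\rangle ds \] satisfies, for every $\varepsilon_1>0$, \[ \frac{d}{dt}F_1(t)\le-c\|\theta\|^2-\|\eta\|_{\mathcal V}^2+\varepsilon_1\|\phi_t\|^2-M\Big(1+\frac1{\varepsilon_1}\Big)\int_0^{+\infty}\kappa'(s)\|\eta_x(s)\|^2ds, \] where $M>0$ is a constant independent of $\varepsilon_1$.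
   Context: $\rho,J,c,\mu,b,\alpha,\xi$ are positive constants with $\mu\xi>b^2$; $\beta\ne0$ real. $\kappa$ satisfies (h1) $\kappa\in C([0,\infty))\cap L^1(0,\infty)$; (h2) $\kappa>0$, $\kappa'\le0$; (h3) $g(0):=\int_0^\infty\kappa(s)ds$; (h4) $\kappa'\le-\delta\kappa$ for some $\delta>0$. $\eta=\eta^t(x,s)=\int_0^s\theta(x,t-\tau)d\tau$. $\langle\cdot,\cdot\rangle,\|\cdot\|$ are the $L^2(0,\pi)$ inner product and norm; $\|\eta\|_{\mathcal V}^2=\int_0^\infty\kappa(s)\|\eta_x(s)\|^2ds$. Solutions are sufficiently regular (strong) solutions so that differentiation is legitimate. *)

theory Defs
  imports "HOL-Analysis.Analysis"
begin

definition dx :: "(real \<Rightarrow> real \<Rightarrow> real) \<Rightarrow> real \<Rightarrow> real \<Rightarrow> real" where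
  "dx f x t = deriv (\<lambda>y. f y t) x"

definition dt :: "(real \<Rightarrow> real \<Rightarrow> real) \<Rightarrow> real \<Rightarrow> real \<Rightarrow> real" where
  "dt f x t = deriv (\<lambda>\<tau>. f x \<tau>) t"

text \<open>The history variable is written eta x t s (= eta^t(x,s)); its slice for fixed s:\<close>

definition slice :: "(real \<Rightarrow> real \<Rightarrow> real \<Rightarrow> real) \<Rightarrow> real \<Rightarrow> real \<Rightarrow> real \<Rightarrow> real" where
  "slice eta s = (\<lambda>x t. eta x t s)"

definition ds :: "(real \<Rightarrow> real \<Rightarrow> real \<Rightarrow> real) \<Rightarrow> real \<Rightarrow> real \<Rightarrow> real \<Rightarrow> real" where
  "ds eta x t s = deriv (\<lambda>\<sigma>. eta x t \<sigma>) s"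

definition L2ip :: "(real \<Rightarrow> real) \<Rightarrow> (real \<Rightarrow> real) \<Rightarrow> real" where
  "L2ip f g = integral {0..pi} (\<lambda>x. f x * g x)"

definition L2norm :: "(real \<Rightarrow> real) \<Rightarrow> real" where
  "L2norm f = sqrt (integral {0..pi} (\<lambda>x. (f x)^2))"

definition g0 :: "(real \<Rightarrow> real) \<Rightarrow> real" where
  "g0 kappa = integral {0..} kappa"

definition Vnorm2 :: "(real \<Rightarrow> real) \<Rightarrow> (real \<Rightarrow> real \<Rightarrow> real \<Rightarrow> real) \<Rightarrow> real \<Rightarrow> real" where
  "Vnorm2 kappa eta t = integral {0..} (\<lambda>s. kappa s * (L2norm (\<lambda>x. dx (slice eta s) x t))^2)"

definition F1 :: "real \<Rightarrow> (real \<Rightarrow> real) \<Rightarrow> (real \<Rightarrow> real \<Rightarrow> real) \<Rightarrow>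
    (real \<Rightarrow> real \<Rightarrow> real \<Rightarrow> real) \<Rightarrow> real \<Rightarrow> real" where
  "F1 c kappa theta eta t =
     - (2 * c / g0 kappa) * integral {0..} (\<lambda>s. kappa s * L2ip (\<lambda>x. theta x t) (\<lambda>x. eta x t s))"

text \<open>Regularity ("sufficiently regular strong solution"): classical C^2 in (x,t).\<close>

definition C2fun :: "(real \<Rightarrow> real \<Rightarrow> real) \<Rightarrow> bool" where
  "C2fun f \<longleftrightarrow>
     (\<forall>g \<in> {f, dx f, dt f}. \<forall>x t. (\<lambda>y. g y t) differentiable (at x) \<and> (\<lambda>\<tau>. g x \<tau>) differentiable (at t)) \<and>
     (\<forall>g \<in> {f, dx f, dt f, dx (dx f), dt (dx f), dx (dt f), dt (dt f)}.
        continuous_on UNIV (\<lambda>(x, t). g x t))"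

definition eta_regular :: "(real \<Rightarrow> real \<Rightarrow> real \<Rightarrow> real) \<Rightarrow> bool" where
  "eta_regular eta \<longleftrightarrow>
     (\<forall>s. C2fun (slice eta s)) \<and>
     (\<forall>x t s. (\<lambda>\<sigma>. eta x t \<sigma>) differentiable (at s)) \<and>
     (\<forall>h \<in> {eta, \<lambda>x t s. dx (slice eta s) x t, \<lambda>x t s. dx (dx (slice eta s)) x t,
              \<lambda>x t s. dt (slice eta s) x t, ds eta}.
        continuous_on UNIV (\<lambda>(x, t, s). h x t s)) \<and>
     (\<forall>a b. \<exists>B. \<forall>x\<in>{0..pi}. \<forall>t\<in>{a..b}. \<forall>s\<ge>0.
        \<bar>eta x t s\<bar> \<le> B * (1 + s) \<and>
        \<bar>dx (slice eta s) x t\<bar> \<le> B * (1 + s) \<and>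
        \<bar>dx (dx (slice eta s)) x t\<bar> \<le> B * (1 + s) \<and>
        \<bar>dt (slice eta s) x t\<bar> \<le> B * (1 + s) \<and>
        \<bar>ds eta x t s\<bar> \<le> B * (1 + s))"

definition is_solution ::
  "real \<Rightarrow> real \<Rightarrow> real \<Rightarrow> real \<Rightarrow> real \<Rightarrow> real \<Rightarrow> real \<Rightarrow> real \<Rightarrow> (real \<Rightarrow> real) \<Rightarrow>
   (real \<Rightarrow> real \<Rightarrow> real) \<Rightarrow> (real \<Rightarrow> real \<Rightarrow> real) \<Rightarrow> (real \<Rightarrow> real \<Rightarrow> real) \<Rightarrow>
   (real \<Rightarrow> real \<Rightarrow> real \<Rightarrow> real) \<Rightarrow> bool" where
  "is_solution rho J c mu b alpha xi beta kappa u phi theta eta \<longleftrightarrow>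
     C2fun u \<and> C2fun phi \<and> C2fun theta \<and> eta_regular eta \<and>
     (\<forall>x\<in>{0<..<pi}. \<forall>t>0.
        rho * dt (dt u) x t = mu * dx (dx u) x t + b * dx phi x t \<and>
        J * dt (dt phi) x t = alpha * dx (dx phi) x t - b * dx u x t - xi * phi x t
                                - beta * dx theta x t \<and>
        c * dt theta x t = - beta * dt (dx phi) x t
                           + integral {0..} (\<lambda>s. kappa s * dx (dx (slice eta s)) x t) \<and>
        (\<forall>s>0. dt (slice eta s) x t = theta x t - ds eta x t s)) \<and>
     (\<forall>t>0. u 0 t = 0 \<and> u pi t = 0 \<and> dx phi 0 t = 0 \<and> dx phi pi t = 0 \<and>
            theta 0 t = 0 \<and> theta pi t = 0 \<and>
            (\<forall>s\<ge>0. eta 0 t s = 0 \<and> eta pi t s = 0) \<and>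
            (\<forall>x\<in>{0..pi}. eta x t 0 = 0))"

end

theory Submission
  imports Defs
begin

lemma cbi:
  fixes f g :: "real \<Rightarrow> real"
  assumes "continuous_on S f" "closed S" "g integrable_on S" "\<And>x. x \<in> S \<Longrightarrow> \<bar>f x\<bar> \<le> g x"
  shows "f integrable_on S"
proof (rule measurable_bounded_by_integrable_imp_integrable)
  show "S \<in> sets lebesgue" using assms(2) by (metis borel_closed sets_completionI_sets sets_lborel)
  then show "f \<in> borel_measurable (lebesgue_on S)"
    using assms(1) continuous_imp_measurable_on_sets_lebesgue by blast
qed (use assms in auto)


lemma mvt_bound:
  fixes f f' :: "real \<Rightarrow> real"
  assumes "\<And>y. \<bar>y - t\<bar> < r \<Longrightarrow> (f has_real_derivative f' y) (at y)"
    and "\<And>y. \<bar>y - t\<bar> < r \<Longrightarrow> \<bar>f' y\<bar> \<le> H"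
    and "\<bar>y - t\<bar> < r"
  shows "\<bar>f y - f t\<bar> \<le> H * \<bar>y - t\<bar>"
proof (cases "y = t")
  case True then show ?thesis by simp
next
  case False
  show ?thesis
  proof (cases "t < y")
    case True
    have "\<forall>x. t \<le> x \<and> x \<le> y \<longrightarrow> DERIV f x :> f' x"
      using assms(1,3) True by (intro allI impI assms(1)) auto
    then obtain z where z: "t < z" "z < y" "f y - f t = (y - t) * f' z"
      using MVT2[of t y f f'] True by blast
    have "\<bar>f' z\<bar> \<le> H" using assms(2,3) z by auto
    then show ?thesis using z True by (simp add: abs_mult mult.commute mult_right_mono)
  next
    case False
    then have ty: "y < t" using \<open>y \<noteq> t\<close> by auto
    have "\<forall>x. y \<le> x \<and> x \<le> t \<longrightarrow> DERIV f x :> f' x"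
      using assms(1,3) ty by (intro allI impI assms(1)) auto
    then obtain z where z: "y < z" "z < t" "f t - f y = (t - y) * f' z"
      using MVT2[of y t f f'] ty by blast
    have "\<bar>f' z\<bar> \<le> H" using assms(2,3) z by auto
    then show ?thesis using z ty by (simp add: abs_mult mult.commute mult_right_mono abs_minus_commute)
  qed
qed

lemma diff_under_integral:
  fixes f f' :: "real \<Rightarrow> real \<Rightarrow> real" and h :: "real \<Rightarrow> real" and S :: "real set"
  assumes r: "r > 0"
    and deriv: "\<And>\<tau> s. s \<in> S \<Longrightarrow> \<bar>\<tau> - t\<bar> < r \<Longrightarrow> ((\<lambda>\<tau>. f \<tau> s) has_real_derivative f' \<tau> s) (at \<tau>)"
    and bnd: "\<And>\<tau> s. s \<in> S \<Longrightarrow> \<bar>\<tau> - t\<bar> < r \<Longrightarrow> \<bar>f' \<tau> s\<bar> \<le> h s"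
    and hint: "h integrable_on S"
    and fint: "\<And>\<tau>. \<bar>\<tau> - t\<bar> < r \<Longrightarrow> (f \<tau>) integrable_on S"
    and f'int: "(f' t) integrable_on S"
  shows "((\<lambda>\<tau>. integral S (f \<tau>)) has_real_derivative integral S (f' t)) (at t)"
  unfolding has_field_derivative_iff
proof (subst tendsto_at_iff_sequentially, intro allI impI)
  fix X :: "nat \<Rightarrow> real"
  assume X: "\<forall>i. X i \<in> UNIV - {t}" and Xt: "X \<longlonglongrightarrow> t"
  define q where "q = (\<lambda>k s. if \<bar>X k - t\<bar> < r then (f (X k) s - f t s) / (X k - t) else f' t s)"
  have ev: "\<forall>\<^sub>F k in sequentially. \<bar>X k - t\<bar> < r"
  proof -
    have "\<forall>\<^sub>F k in sequentially. dist (X k) t < r" using Xt r by (rule tendstoD)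
    then show ?thesis by (simp add: dist_real_def)
  qed
  have qint: "q k integrable_on S" for k
  proof (cases "\<bar>X k - t\<bar> < r")
    case True
    then have "(\<lambda>s. (f (X k) s - f t s) / (X k - t)) integrable_on S"
      using fint[of "X k"] fint[of t] r by (intro integrable_on_divide integrable_diff) auto
    then show ?thesis using True by (simp add: q_def)
  qed (use f'int in \<open>simp add: q_def\<close>)
  have qb: "norm (q k s) \<le> h s" if s: "s \<in> S" for k s
  proof (cases "\<bar>X k - t\<bar> < r")
    case True
    have "\<bar>f (X k) s - f t s\<bar> \<le> h s * \<bar>X k - t\<bar>"
      using mvt_bound[of t r "\<lambda>\<tau>. f \<tau> s" "\<lambda>\<tau>. f' \<tau> s" "h s" "X k"] deriv[OF s] bnd[OF s] True by blast
    moreover have "X k \<noteq> t" using X by auto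
    ultimately show ?thesis using True by (simp add: q_def abs_divide divide_le_eq)
  next
    case False then show ?thesis using bnd[OF s, of t] r by (simp add: q_def)
  qed
  have qconv: "(\<lambda>k. q k s) \<longlonglongrightarrow> f' t s" if s: "s \<in> S" for s
  proof -
    have "((\<lambda>y. (f y s - f t s) / (y - t)) \<longlongrightarrow> f' t s) (at t)"
      using deriv[OF s, of t] r by (simp add: has_field_derivative_iff)
    then have "((\<lambda>k. (f (X k) s - f t s) / (X k - t)) \<longlonglongrightarrow> f' t s)"
      using X Xt by (subst (asm) tendsto_at_iff_sequentially) (auto simp: o_def)
    then show ?thesis
      by (rule Lim_transform_eventually) (use ev in \<open>auto simp: q_def elim: eventually_mono\<close>)
  qed
  have lim: "(\<lambda>k. integral S (q k)) \<longlonglongrightarrow> integral S (f' t)"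
    by (rule dominated_convergence(2)[OF qint hint qb qconv])
  show "((\<lambda>y. (integral S (f y) - integral S (f t)) / (y - t)) \<circ> X) \<longlonglongrightarrow> integral S (f' t)"
  proof (rule Lim_transform_eventually[OF lim])
    show "\<forall>\<^sub>F k in sequentially. integral S (q k) = ((\<lambda>y. (integral S (f y) - integral S (f t)) / (y - t)) \<circ> X) k"
      using ev
    proof (rule eventually_mono)
      fix k assume k: "\<bar>X k - t\<bar> < r"
      have "integral S (q k) = integral S (\<lambda>s. (f (X k) s - f t s) / (X k - t))"
        using k by (simp add: q_def)
      also have "\<dots> = (integral S (f (X k)) - integral S (f t)) / (X k - t)"
        using fint[OF k] fint[of t] r by (simp add: integral_diff)
      finally show "integral S (q k) = ((\<lambda>y. (integral S (f y) - integral S (f t)) / (y - t)) \<circ> X) k"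
        by simp
    qed
  qed
qed


lemma cont_slice1:
  assumes "continuous_on (A \<times> B) (\<lambda>(x, y). f x y)" "y \<in> B"
  shows "continuous_on A (\<lambda>x. f x y)"
proof -
  have "continuous_on A (\<lambda>x. (\<lambda>(x, y). f x y) (x, y))"
    by (rule continuous_on_compose2[OF assms(1)]) (use assms(2) in \<open>auto intro!: continuous_intros\<close>)
  then show ?thesis by simp
qed

lemma cont_slice2:
  assumes "continuous_on (A \<times> B) (\<lambda>(x, y). f x y)" "x \<in> A"
  shows "continuous_on B (\<lambda>y. f x y)"
proof -
  have "continuous_on B (\<lambda>y. (\<lambda>(x, y). f x y) (x, y))"
    by (rule continuous_on_compose2[OF assms(1)]) (use assms(2) in \<open>auto intro!: continuous_intros\<close>)
  then show ?thesis by simp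
qed

lemma imul: "f integrable_on S \<Longrightarrow> (\<lambda>x. c * f x :: real) integrable_on S"
  using integrable_on_cmult_left[of f S c] by simp

lemma imulr: "f integrable_on S \<Longrightarrow> (\<lambda>x. f x * c :: real) integrable_on S"
  using integrable_on_cmult_right[of f S c] by simp

lemma iconst: "(\<lambda>x. c :: real) integrable_on {a..b::real}"
  by (simp add: integrable_const_ivl)

lemma iabs:
  fixes f g :: "real \<Rightarrow> real"
  assumes "f integrable_on S" "g integrable_on S" "\<And>x. x \<in> S \<Longrightarrow> \<bar>f x\<bar> \<le> g x"
  shows "\<bar>integral S f\<bar> \<le> integral S g"
  using integral_norm_bound_integral[OF assms(1,2)] assms(3) by simp

lemma lim_trunc:
  fixes f g :: "real \<Rightarrow> real"
  assumes cont: "continuous_on {a..} f" and gi: "g integrable_on {a..}"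
    and bnd: "\<And>x. x \<ge> a \<Longrightarrow> \<bar>f x\<bar> \<le> g x"
  shows "(\<lambda>n. integral {a..real n} f) \<longlonglongrightarrow> integral {a..} f"
proof -
  define fk where "fk = (\<lambda>k::nat. \<lambda>x::real. if x \<in> {..real k} then f x else 0)"
  have eq: "integral {a..} (fk k) = integral {a..real k} f" for k
    unfolding fk_def integral_restrict_Int by (simp add: Int_commute atLeastAtMost_def)
  have fki: "fk k integrable_on {a..}" for k
  proof -
    have "f integrable_on {a..real k}"
      by (rule integrable_continuous_interval) (rule continuous_on_subset[OF cont], auto)
    then have "f integrable_on ({..real k} \<inter> {a..})" by (simp add: Int_commute atLeastAtMost_def)
    then show ?thesis unfolding fk_def by (simp only: integrable_restrict_Int)
  qed
  have b: "norm (fk k x) \<le> g x" if "x \<in> {a..}" for k x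
    using bnd[of x] that by (auto simp: fk_def)
  have c: "(\<lambda>k. fk k x) \<longlonglongrightarrow> f x" if "x \<in> {a..}" for x
  proof (rule tendsto_eventually)
    obtain N :: nat where "x \<le> real N" using real_arch_simple by blast
    then show "\<forall>\<^sub>F k in sequentially. fk k x = f x"
      unfolding eventually_sequentially fk_def by (intro exI[of _ N]) auto
  qed
  show ?thesis using dominated_convergence(2)[OF fki gi b c] by (simp add: eq)
qed

lemma swap_half:
  fixes f :: "real \<Rightarrow> real \<Rightarrow> real" and g :: "real \<Rightarrow> real"
  assumes ab: "a \<le> b"
    and cont: "continuous_on ({a..b} \<times> {0..}) (\<lambda>(x, \<sigma>). f x \<sigma>)"
    and gi: "g integrable_on {0..}"
    and bnd: "\<And>x \<sigma>. x \<in> {a..b} \<Longrightarrow> \<sigma> \<ge> 0 \<Longrightarrow> \<bar>f x \<sigma>\<bar> \<le> g \<sigma>"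
  shows "integral {a..b} (\<lambda>x. integral {0..} (f x)) = integral {0..} (\<lambda>\<sigma>. integral {a..b} (\<lambda>x. f x \<sigma>))"
proof -
  have g0: "g \<sigma> \<ge> 0" if "\<sigma> \<ge> 0" for \<sigma>
    using bnd[of a \<sigma>] ab that by auto
  have cx: "continuous_on {0..} (f x)" if "x \<in> {a..b}" for x
    using cont_slice2[OF cont that] by simp
  have fint: "f x integrable_on {0..}" if "x \<in> {a..b}" for x
    by (rule cbi[OF cx[OF that] _ gi]) (use bnd that in auto)
  have swapn: "integral {a..b} (\<lambda>x. integral {0..real n} (f x)) =
      integral {0..real n} (\<lambda>\<sigma>. integral {a..b} (\<lambda>x. f x \<sigma>))" for n
  proof -
    have "continuous_on (cbox (a, 0) (b, real n)) (\<lambda>(x, \<sigma>). f x \<sigma>)"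
      by (rule continuous_on_subset[OF cont]) (auto simp: cbox_Pair_eq)
    from integral_swap_continuous[OF this] show ?thesis by (simp add: cbox_interval)
  qed
  define F where "F = (\<lambda>\<sigma>. integral {a..b} (\<lambda>x. f x \<sigma>))"
  have Fc: "continuous_on {0..} F"
  proof -
    have "continuous_on ({0..} \<times> cbox a b) (\<lambda>p. (\<lambda>(x, \<sigma>). f x \<sigma>) (snd p, fst p))"
      by (rule continuous_on_compose2[OF cont]) (auto intro!: continuous_intros simp: cbox_interval)
    then have "continuous_on ({0..} \<times> cbox a b) (\<lambda>(\<sigma>, x). f x \<sigma>)"
      by (simp add: split_beta)
    from integral_continuous_on_param[OF this] show ?thesis by (simp add: F_def cbox_interval)
  qed
  have Fb: "\<bar>F \<sigma>\<bar> \<le> (b - a) * g \<sigma>" if "\<sigma> \<ge> 0" for \<sigma>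
  proof -
    have "\<bar>F \<sigma>\<bar> \<le> integral {a..b} (\<lambda>x. g \<sigma>)"
      unfolding F_def
    proof (rule iabs)
      show "(\<lambda>x. f x \<sigma>) integrable_on {a..b}"
        by (rule integrable_continuous_interval, rule cont_slice1[OF cont]) (use that in auto)
    qed (use bnd that in auto)
    then show ?thesis using ab by simp
  qed
  have R: "(\<lambda>n. integral {0..real n} F) \<longlonglongrightarrow> integral {0..} F"
    by (rule lim_trunc[OF Fc, of "\<lambda>\<sigma>. (b - a) * g \<sigma>"]) (use integrable_on_cmult_left[OF gi] Fb in auto)
  define Ln where "Ln = (\<lambda>n::nat. \<lambda>x. integral {0..real n} (f x))"
  have Lnc: "continuous_on {a..b} (Ln n)" for n
  proof -
    have "continuous_on ({a..b} \<times> cbox 0 (real n)) (\<lambda>(x, \<sigma>). f x \<sigma>)"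
      by (rule continuous_on_subset[OF cont]) auto
    from integral_continuous_on_param[OF this] show ?thesis by (simp add: Ln_def cbox_interval)
  qed
  have Lnb: "norm (Ln n x) \<le> integral {0..} g" if x: "x \<in> {a..b}" for n x
  proof -
    have "\<bar>Ln n x\<bar> \<le> integral {0..real n} g"
      unfolding Ln_def
    proof (rule iabs)
      show "f x integrable_on {0..real n}" by (rule integrable_on_subinterval[OF fint[OF x]]) auto
      show "g integrable_on {0..real n}" by (rule integrable_on_subinterval[OF gi]) auto
    qed (use bnd x in auto)
    also have "\<dots> \<le> integral {0..} g"
      by (rule integral_subset_le) (auto intro: integrable_on_subinterval[OF gi] g0 gi)
    finally show ?thesis by simp
  qed
  have Lconv: "(\<lambda>n. Ln n x) \<longlonglongrightarrow> integral {0..} (f x)" if x: "x \<in> {a..b}" for x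
    unfolding Ln_def by (rule lim_trunc[OF cx[OF x] gi]) (use bnd x in auto)
  have L: "(\<lambda>n. integral {a..b} (Ln n)) \<longlonglongrightarrow> integral {a..b} (\<lambda>x. integral {0..} (f x))"
  proof (rule dominated_convergence(2)[OF _ _ Lnb Lconv])
    show "Ln k integrable_on {a..b}" for k by (rule integrable_continuous_interval[OF Lnc])
  qed (auto simp: integrable_const_ivl)
  have R': "(\<lambda>n. integral {a..b} (Ln n)) \<longlonglongrightarrow> integral {0..} F"
    using R swapn unfolding Ln_def F_def by simp
  show ?thesis
    using LIMSEQ_unique[OF L R'] by (simp add: F_def)
qed


locale kap =
  fixes \<kappa> \<kappa>' :: "real \<Rightarrow> real" and \<delta> :: real
  assumes kc: "continuous_on {0..} \<kappa>"
    and kd: "\<And>s. s \<ge> 0 \<Longrightarrow> (\<kappa> has_real_derivative \<kappa>' s) (at s within {0..})"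
    and kdc: "continuous_on {0..} \<kappa>'"
    and kpos: "\<And>s. s \<ge> 0 \<Longrightarrow> \<kappa> s > 0"
    and dpos: "\<delta> > 0"
    and kdec: "\<And>s. s \<ge> 0 \<Longrightarrow> \<kappa>' s \<le> - \<delta> * \<kappa> s"
begin

lemma kd_at: "s > 0 \<Longrightarrow> (\<kappa> has_real_derivative \<kappa>' s) (at s)"
  using kd[of s] at_within_interior[of s "{0..}"] by simp

lemma kd_nonpos: assumes "s \<ge> 0" shows "\<kappa>' s \<le> 0"
proof -
  have "\<delta> * \<kappa> s > 0" using dpos kpos[OF assms] by simp
  then show ?thesis using kdec[OF assms] by linarith
qed

lemma k_decr: assumes "0 \<le> a" "a \<le> b" shows "\<kappa> b \<le> \<kappa> a"
proof (rule DERIV_nonpos_imp_decreasing_open[OF assms(2)])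
  fix x assume "a < x" "x < b"
  then show "\<exists>y. DERIV \<kappa> x :> y \<and> y \<le> 0"
  proof (intro exI conjI)
    show "DERIV \<kappa> x :> \<kappa>' x" by (rule kd_at) (use \<open>a < x\<close> assms in auto)
    show "\<kappa>' x \<le> 0" by (rule kd_nonpos) (use \<open>a < x\<close> assms in auto)
  qed
next
  show "continuous_on {a..b} \<kappa>" by (rule continuous_on_subset[OF kc]) (use assms in auto)
qed

lemma k_exp: assumes "s \<ge> 0" shows "\<kappa> s \<le> \<kappa> 0 * exp (- \<delta> * s)"
proof -
  define h where "h = (\<lambda>s. exp (\<delta> * s) * \<kappa> s)"
  have "h s \<le> h 0"
  proof (rule DERIV_nonpos_imp_decreasing_open[OF assms])
    fix x assume x: "0 < x" "x < s"
    have "DERIV h x :> exp (\<delta> * x) * \<delta> * \<kappa> x + exp (\<delta> * x) * \<kappa>' x"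
      unfolding h_def using x by (auto intro!: derivative_eq_intros kd_at)
    moreover have "exp (\<delta> * x) * \<delta> * \<kappa> x + exp (\<delta> * x) * \<kappa>' x \<le> 0"
    proof -
      have "exp (\<delta> * x) * (\<delta> * \<kappa> x + \<kappa>' x) \<le> 0"
        using kdec[of x] x by (intro mult_nonneg_nonpos) auto
      then show ?thesis by (simp add: algebra_simps)
    qed
    ultimately show "\<exists>y. DERIV h x :> y \<and> y \<le> 0" by blast
  next
    show "continuous_on {0..s} h" unfolding h_def
      by (intro continuous_intros continuous_on_subset[OF kc]) auto
  qed
  then have "exp (\<delta> * s) * \<kappa> s \<le> \<kappa> 0" by (simp add: h_def)
  then show ?thesis by (simp add: exp_minus field_simps)
qed

lemma k_sq_bound: assumes "s \<ge> 0"
  shows "\<kappa> s * (1 + s)^2 \<le> \<kappa> 0 * (1 + 4 / \<delta>)^2 * exp (- (\<delta> / 2) * s)"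
proof -
  have e: "1 + \<delta> * s / 4 \<le> exp (\<delta> * s / 4)" by (rule exp_ge_add_one_self_aux) (use assms dpos in auto)
  have "1 + s \<le> (1 + 4 / \<delta>) * exp (\<delta> * s / 4)"
  proof -
    have "s = (4 / \<delta>) * (\<delta> * s / 4)" using dpos by simp
    also have "\<dots> \<le> (4 / \<delta>) * exp (\<delta> * s / 4) - 4 / \<delta>"
      using e dpos by (simp add: field_simps)
    finally have "s \<le> (4 / \<delta>) * exp (\<delta> * s / 4) - 4 / \<delta>" .
    moreover have "1 \<le> exp (\<delta> * s / 4)" using assms dpos by simp
    moreover have "(1 + 4 / \<delta>) * exp (\<delta> * s / 4) = exp (\<delta> * s / 4) + (4 / \<delta>) * exp (\<delta> * s / 4)"
      by (simp add: algebra_simps)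
    moreover have "4 / \<delta> > 0" using dpos by simp
    ultimately show ?thesis by linarith
  qed
  then have "(1 + s)^2 \<le> ((1 + 4 / \<delta>) * exp (\<delta> * s / 4))^2"
    using assms by (intro power_mono) auto
  also have "\<dots> = (1 + 4 / \<delta>)^2 * exp (\<delta> * s / 2)"
    by (simp add: power_mult_distrib power2_eq_square flip: exp_add)
  finally have a: "(1 + s)^2 \<le> (1 + 4 / \<delta>)^2 * exp (\<delta> * s / 2)" .
  have "\<kappa> s * (1 + s)^2 \<le> \<kappa> 0 * exp (- \<delta> * s) * ((1 + 4 / \<delta>)^2 * exp (\<delta> * s / 2))"
    by (rule mult_mono[OF k_exp[OF assms] a]) (use kpos[of 0] in auto)
  also have "\<dots> = \<kappa> 0 * (1 + 4 / \<delta>)^2 * (exp (- \<delta> * s) * exp (\<delta> * s / 2))" by simp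
  also have "exp (- \<delta> * s) * exp (\<delta> * s / 2) = exp (- (\<delta> / 2) * s)"
    by (simp flip: exp_add)
  finally show ?thesis .
qed

lemma k_int2: "(\<lambda>s. \<kappa> s * (1 + s)^2) integrable_on {0..}"
proof (rule cbi)
  show "continuous_on {0..} (\<lambda>s. \<kappa> s * (1 + s)^2)" by (intro continuous_intros kc)
  show "(\<lambda>s. \<kappa> 0 * (1 + 4 / \<delta>)^2 * exp (- (\<delta> / 2) * s)) integrable_on {0..}"
    by (intro imul integrable_on_exp_minus_to_infinity) (use dpos in auto)
  show "\<bar>\<kappa> s * (1 + s)^2\<bar> \<le> \<kappa> 0 * (1 + 4 / \<delta>)^2 * exp (- (\<delta> / 2) * s)" if "s \<in> {0..}" for s
    using k_sq_bound[of s] kpos[of s] that by simp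
qed auto

lemma k_int1: "(\<lambda>s. \<kappa> s * (1 + s)) integrable_on {0..}"
proof (rule cbi[OF _ _ k_int2])
  show "continuous_on {0..} (\<lambda>s. \<kappa> s * (1 + s))" by (intro continuous_intros kc)
  show "\<bar>\<kappa> s * (1 + s)\<bar> \<le> \<kappa> s * (1 + s)^2" if "s \<in> {0..}" for s
  proof -
    have "(1 + s) * 1 \<le> (1 + s) * (1 + s)" using that by (intro mult_left_mono) auto
    then have "\<kappa> s * (1 + s) \<le> \<kappa> s * (1 + s)^2"
      using kpos[of s] that by (intro mult_left_mono) (auto simp: power2_eq_square)
    then show ?thesis using kpos[of s] that by simp
  qed
qed auto

lemma k_int0: "\<kappa> integrable_on {0..}"
proof (rule cbi[OF kc _ k_int2])
  show "\<bar>\<kappa> s\<bar> \<le> \<kappa> s * (1 + s)^2" if "s \<in> {0..}" for s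
  proof -
    have "1 \<le> (1 + s)^2" using that by (intro one_le_power) auto
    then show ?thesis using kpos[of s] that by simp
  qed
qed auto

lemma k_lim: "(\<lambda>n. \<kappa> (real n) * (1 + real n)^2) \<longlonglongrightarrow> 0"
proof -
  have "(\<lambda>n. \<kappa> 0 * (1 + 4 / \<delta>)^2 * exp (- (\<delta> / 2) * real n)) \<longlonglongrightarrow> \<kappa> 0 * (1 + 4 / \<delta>)^2 * 0"
  proof (intro tendsto_mult tendsto_const)
    have "(\<lambda>n. exp (- (\<delta> / 2)) ^ n) \<longlonglongrightarrow> 0"
      by (rule LIMSEQ_realpow_zero) (use dpos in auto)
    then show "(\<lambda>n. exp (- (\<delta> / 2) * real n)) \<longlonglongrightarrow> 0"
      by (simp add: exp_of_nat_mult[symmetric] mult.commute)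
  qed
  then have "(\<lambda>n. \<kappa> 0 * (1 + 4 / \<delta>)^2 * exp (- (\<delta> / 2) * real n)) \<longlonglongrightarrow> 0" by simp
  moreover have "\<forall>\<^sub>F n in sequentially. norm (\<kappa> (real n) * (1 + real n)^2) \<le> \<kappa> 0 * (1 + 4 / \<delta>)^2 * exp (- (\<delta> / 2) * real n)"
  proof (rule always_eventually, rule allI)
    fix n :: nat
    have "0 \<le> \<kappa> (real n) * (1 + real n)^2" using kpos[of "real n"] by simp
    then show "norm (\<kappa> (real n) * (1 + real n)^2) \<le> \<kappa> 0 * (1 + 4 / \<delta>)^2 * exp (- (\<delta> / 2) * real n)"
      using k_sq_bound[of "real n"] by simp
  qed
  ultimately show ?thesis by (rule Lim_null_comparison[rotated])
qed

lemma g0_pos: "integral {0..} \<kappa> > 0"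
proof -
  have i1: "\<kappa> integrable_on {0..1}" by (rule integrable_on_subinterval[OF k_int0]) auto
  have "integral {0..1} (\<lambda>s::real. \<kappa> 1) \<le> integral {0..1} \<kappa>"
  proof (rule integral_le[OF _ i1])
    show "(\<lambda>s::real. \<kappa> 1) integrable_on {0..1::real}" by (rule iconst)
    show "\<kappa> 1 \<le> \<kappa> x" if "x \<in> {0..1}" for x using k_decr[of x 1] that by auto
  qed
  also have "\<dots> \<le> integral {0..} \<kappa>"
    by (rule integral_subset_le[OF _ i1 k_int0]) (auto intro!: less_imp_le[OF kpos])
  finally show ?thesis using kpos[of 1] by simp
qed

end


lemma mono_trunc:
  fixes f :: "real \<Rightarrow> real"
  assumes cont: "continuous_on {0..} f" and nn: "\<And>s. s \<ge> 0 \<Longrightarrow> f s \<ge> 0"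
    and bd: "\<And>k::nat. integral {0..real k} f \<le> Bd"
  shows "f integrable_on {0..}"
proof -
  define fk where "fk = (\<lambda>k::nat. \<lambda>x::real. if x \<in> {..real k} then f x else 0)"
  have eq: "integral {0..} (fk k) = integral {0..real k} f" for k
    unfolding fk_def integral_restrict_Int by (simp add: Int_commute atLeastAtMost_def)
  have fki: "fk k integrable_on {0..}" for k
  proof -
    have "f integrable_on {0..real k}"
      by (rule integrable_continuous_interval) (rule continuous_on_subset[OF cont], auto)
    then have "f integrable_on ({..real k} \<inter> {0..})" by (simp add: Int_commute atLeastAtMost_def)
    then show ?thesis unfolding fk_def by (simp only: integrable_restrict_Int)
  qed
  have inc: "fk k x \<le> fk (Suc k) x" if "x \<in> {0..}" for k x
    using nn[of x] that by (auto simp: fk_def)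
  have c: "(\<lambda>k. fk k x) \<longlonglongrightarrow> f x" if "x \<in> {0..}" for x
  proof (rule tendsto_eventually)
    obtain N :: nat where "x \<le> real N" using real_arch_simple by blast
    then show "\<forall>\<^sub>F k in sequentially. fk k x = f x"
      unfolding eventually_sequentially fk_def by (intro exI[of _ N]) auto
  qed
  have b: "bounded (range (\<lambda>k. integral {0..} (fk k)))"
  proof -
    have "\<bar>integral {0..} (fk k)\<bar> \<le> Bd" for k
    proof -
      have "0 \<le> integral {0..real k} f"
        by (rule integral_nonneg) (auto intro!: integrable_continuous_interval continuous_on_subset[OF cont] nn)
      then show ?thesis using bd[of k] by (simp add: eq)
    qed
    then show ?thesis unfolding bounded_iff by (intro exI[of _ Bd]) auto
  qed
  show ?thesis using monotone_convergence_increasing[OF fki inc c b] by blast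
qed

lemma ibp0:
  fixes u u' v v' :: "real \<Rightarrow> real"
  assumes ab: "a \<le> b"
    and du: "\<And>x. x \<in> {a..b} \<Longrightarrow> (u has_real_derivative u' x) (at x)"
    and dv: "\<And>x. x \<in> {a..b} \<Longrightarrow> (v has_real_derivative v' x) (at x)"
    and cu: "continuous_on {a..b} u'" and cv: "continuous_on {a..b} v'"
    and va: "v a = 0" and vb: "v b = 0"
  shows "integral {a..b} (\<lambda>x. u' x * v x) = - integral {a..b} (\<lambda>x. u x * v' x)"
proof -
  have cu0: "continuous_on {a..b} u"
    by (rule DERIV_continuous_on) (use du in \<open>auto intro: has_field_derivative_at_within\<close>)
  have cv0: "continuous_on {a..b} v"
    by (rule DERIV_continuous_on) (use dv in \<open>auto intro: has_field_derivative_at_within\<close>)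
  have i: "((\<lambda>x. u x * v' x) has_integral integral {a..b} (\<lambda>x. u x * v' x)) {a..b}"
    by (rule integrable_integral, rule integrable_continuous_interval) (intro continuous_intros cu0 cv)
  have "((\<lambda>x. u' x * v x) has_integral (- integral {a..b} (\<lambda>x. u x * v' x))) {a..b}"
  proof (rule integration_by_parts[OF bounded_bilinear_mult ab cu0 cv0])
    show "(u has_vector_derivative u' x) (at x)" if "x \<in> {a..b}" for x
      using du[OF that] by (simp add: has_real_derivative_iff_has_vector_derivative)
    show "(v has_vector_derivative v' x) (at x)" if "x \<in> {a..b}" for x
      using dv[OF that] by (simp add: has_real_derivative_iff_has_vector_derivative)
    show "((\<lambda>x. u x * v' x) has_integral u b * v b - u a * v a - - integral {a..b} (\<lambda>x. u x * v' x)) {a..b}"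
      using i by (simp add: va vb)
  qed
  then show ?thesis by (rule integral_unique)
qed

lemma cs1:
  fixes f :: "real \<Rightarrow> real"
  assumes ab: "a \<le> b" and cf: "continuous_on {a..b} f"
  shows "(integral {a..b} f)^2 \<le> (b - a) * integral {a..b} (\<lambda>x. (f x)^2)"
proof (cases "a = b")
  case True then show ?thesis by simp
next
  case False
  define L where "L = b - a"
  then have L: "L > 0" using ab False by simp
  define I where "I = integral {a..b} f"
  define J where "J = integral {a..b} (\<lambda>x. (f x)^2)"
  have fi: "f integrable_on {a..b}" by (rule integrable_continuous_interval[OF cf])
  have f2i: "(\<lambda>x. (f x)^2) integrable_on {a..b}" by (rule integrable_continuous_interval) (intro continuous_intros cf)
  have "0 \<le> integral {a..b} (\<lambda>x. (L * f x - I)^2)"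
    by (rule integral_nonneg) (auto intro!: integrable_continuous_interval continuous_intros cf)
  also have "integral {a..b} (\<lambda>x. (L * f x - I)^2) = integral {a..b} (\<lambda>x. L^2 * (f x)^2 - (2 * L * I) * f x + I^2)"
    by (simp add: power2_eq_square algebra_simps)
  also have "\<dots> = L^2 * J - (2 * L * I) * I + I^2 * L"
  proof -
    have "integral {a..b} (\<lambda>x. L^2 * (f x)^2 - (2 * L * I) * f x + I^2) =
          integral {a..b} (\<lambda>x. L^2 * (f x)^2) - integral {a..b} (\<lambda>x. (2 * L * I) * f x) + integral {a..b} (\<lambda>x. I^2)"
      by (subst integral_add, intro integrable_diff imul f2i fi, rule iconst, subst integral_diff, intro imul f2i fi, intro imul fi, rule refl)
    also have "\<dots> = L^2 * J - (2 * L * I) * I + I^2 * L"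
      using ab by (simp add: I_def J_def L_def)
    finally show ?thesis .
  qed
  also have "\<dots> = L * (L * J - I^2)" by (simp add: power2_eq_square algebra_simps)
  finally have "0 \<le> L * (L * J - I^2)" .
  then have "I^2 \<le> L * J" using L by (simp add: zero_le_mult_iff)
  then show ?thesis by (simp add: I_def J_def L_def)
qed

lemma poinc:
  fixes u u' :: "real \<Rightarrow> real"
  assumes du: "\<And>x. x \<in> {0..pi} \<Longrightarrow> (u has_real_derivative u' x) (at x)"
    and cu: "continuous_on {0..pi} u'" and u0: "u 0 = 0"
  shows "integral {0..pi} (\<lambda>x. (u x)^2) \<le> pi^2 * integral {0..pi} (\<lambda>x. (u' x)^2)"
proof -
  define J where "J = integral {0..pi} (\<lambda>x. (u' x)^2)"
  have cu0: "continuous_on {0..pi} u"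
    by (rule DERIV_continuous_on) (use du in \<open>auto intro: has_field_derivative_at_within\<close>)
  have pt: "(u x)^2 \<le> pi * J" if x: "x \<in> {0..pi}" for x
  proof -
    have "(u' has_integral (u x - u 0)) {0..x}"
    proof (rule fundamental_theorem_of_calculus)
      show "0 \<le> x" using x by auto
      show "(u has_vector_derivative u' y) (at y within {0..x})" if "y \<in> {0..x}" for y
        using du[of y] that x by (auto simp: has_real_derivative_iff_has_vector_derivative intro: has_vector_derivative_at_within)
    qed
    then have ux: "u x = integral {0..x} u'" using u0 by (simp add: integral_unique)
    have cux: "continuous_on {0..x} u'" by (rule continuous_on_subset[OF cu]) (use x in auto)
    have "(u x)^2 \<le> (x - 0) * integral {0..x} (\<lambda>y. (u' y)^2)"
      unfolding ux by (rule cs1) (use x cux in auto)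
    also have "\<dots> \<le> pi * J"
    proof (rule mult_mono)
      show "x - 0 \<le> pi" using x by auto
      show "integral {0..x} (\<lambda>y. (u' y)^2) \<le> J" unfolding J_def
        by (rule integral_subset_le) (use x in \<open>auto intro!: integrable_continuous_interval continuous_intros continuous_on_subset[OF cu]\<close>)
      show "0 \<le> pi" by simp
      show "0 \<le> integral {0..x} (\<lambda>y. (u' y)^2)"
        by (rule integral_nonneg) (auto intro!: integrable_continuous_interval continuous_intros cux)
    qed
    finally show ?thesis .
  qed
  have "integral {0..pi} (\<lambda>x. (u x)^2) \<le> integral {0..pi} (\<lambda>x::real. pi * J)"
    by (rule integral_le) (use pt in \<open>auto intro!: integrable_continuous_interval continuous_intros cu0 iconst\<close>)
  also have "\<dots> = pi^2 * J" by (simp add: power2_eq_square)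
  finally show ?thesis by (simp add: J_def)
qed

context kap begin

lemma kd_int2: "(\<lambda>s. - \<kappa>' s * (1 + s)^2) integrable_on {0..}"
proof (rule mono_trunc)
  show "continuous_on {0..} (\<lambda>s. - \<kappa>' s * (1 + s)^2)" by (intro continuous_intros kdc)
  show "0 \<le> - \<kappa>' s * (1 + s)^2" if "s \<ge> 0" for s using kd_nonpos[OF that] by (simp add: mult_nonpos_nonneg)
  show "integral {0..real k} (\<lambda>s. - \<kappa>' s * (1 + s)^2) \<le> \<kappa> 0 + 2 * integral {0..} (\<lambda>s. \<kappa> s * (1 + s))" for k
  proof -
    define T where "T = real k"
    have T: "T \<ge> 0" by (simp add: T_def)
    define Y where "Y = integral {0..T} (\<lambda>s. \<kappa> s * (2 * (1 + s)))"
    have yi: "((\<lambda>s. \<kappa> s * (2 * (1 + s))) has_integral Y) {0..T}"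
      unfolding Y_def by (rule integrable_integral, rule integrable_continuous_interval)
         (intro continuous_intros continuous_on_subset[OF kc], auto)
    have "((\<lambda>s. \<kappa>' s * (1 + s)^2) has_integral (\<kappa> T * (1 + T)^2 - \<kappa> 0 * (1 + 0)^2 - Y)) {0..T}"
    proof (rule integration_by_parts_interior[OF bounded_bilinear_mult T])
      show "continuous_on {0..T} \<kappa>" by (rule continuous_on_subset[OF kc]) auto
      show "continuous_on {0..T} (\<lambda>s. (1 + s)^2)" by (intro continuous_intros)
      show "(\<kappa> has_vector_derivative \<kappa>' x) (at x)" if "x \<in> {0<..<T}" for x
        using kd_at[of x] that by (simp add: has_real_derivative_iff_has_vector_derivative)
      show "((\<lambda>s. (1 + s)^2) has_vector_derivative (2 * (1 + x))) (at x)" for x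
        unfolding has_real_derivative_iff_has_vector_derivative[symmetric]
        by (auto intro!: derivative_eq_intros)
      show "((\<lambda>x. \<kappa> x * (2 * (1 + x))) has_integral \<kappa> T * (1 + T)^2 - \<kappa> 0 * (1 + 0)^2 - (\<kappa> T * (1 + T)^2 - \<kappa> 0 * (1 + 0)^2 - Y)) {0..T}"
        using yi by simp
    qed
    from has_integral_neg[OF this]
    have "integral {0..T} (\<lambda>s. - (\<kappa>' s * (1 + s)^2)) = - (\<kappa> T * (1 + T)^2 - \<kappa> 0 * (1 + 0)^2 - Y)"
      by (rule integral_unique)
    then have e: "integral {0..T} (\<lambda>s. - \<kappa>' s * (1 + s)^2) = \<kappa> 0 + Y - \<kappa> T * (1 + T)^2"
      by simp
    have "(\<lambda>s. \<kappa> s * (2 * (1 + s))) = (\<lambda>s. 2 * (\<kappa> s * (1 + s)))"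
      by (rule ext) (simp only: mult.left_commute)
    then have "Y = 2 * integral {0..T} (\<lambda>s. \<kappa> s * (1 + s))"
      unfolding Y_def by (simp only: integral_mult_right)
    also have "\<dots> \<le> 2 * integral {0..} (\<lambda>s. \<kappa> s * (1 + s))"
    proof -
      have "integral {0..T} (\<lambda>s. \<kappa> s * (1 + s)) \<le> integral {0..} (\<lambda>s. \<kappa> s * (1 + s))"
      proof (rule integral_subset_le)
        show "(\<lambda>s. \<kappa> s * (1 + s)) integrable_on {0..T}" by (rule integrable_on_subinterval[OF k_int1]) auto
        show "\<forall>x\<in>{0..}. 0 \<le> \<kappa> x * (1 + x)"
          using kpos by (simp add: less_imp_le)
      qed (auto intro: k_int1)
      then show ?thesis by simp
    qed
    finally have "Y \<le> 2 * integral {0..} (\<lambda>s. \<kappa> s * (1 + s))" .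
    moreover have "\<kappa> T * (1 + T)^2 \<ge> 0" using kpos[OF T] by simp
    ultimately show ?thesis using e by (simp add: T_def)
  qed
qed

end


lemma cont2c:
  assumes "continuous_on UNIV (\<lambda>(x, t). h x t)" "continuous_on S a" "continuous_on S b"
  shows "continuous_on S (\<lambda>p. h (a p) (b p))"
proof -
  have "continuous_on S (\<lambda>p. (\<lambda>(x, t). h x t) (a p, b p))"
    by (rule continuous_on_compose2[OF assms(1)]) (auto intro!: continuous_intros assms(2,3))
  then show ?thesis by simp
qed

lemma cont3c:
  assumes "continuous_on UNIV (\<lambda>(x, t, s). h x t s)" "continuous_on S a" "continuous_on S b" "continuous_on S c"
  shows "continuous_on S (\<lambda>p. h (a p) (b p) (c p))"
proof -
  have "continuous_on S (\<lambda>p. (\<lambda>(x, t, s). h x t s) (a p, b p, c p))"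
    by (rule continuous_on_compose2[OF assms(1)]) (auto intro!: continuous_intros assms(2,3,4))
  then show ?thesis by simp
qed

lemma c2_dx: "C2fun f \<Longrightarrow> ((\<lambda>y. f y t) has_real_derivative dx f y t) (at y)"
  unfolding C2fun_def dx_def by (simp add: DERIV_deriv_iff_real_differentiable)

lemma c2_dt: "C2fun f \<Longrightarrow> ((\<lambda>\<tau>. f x \<tau>) has_real_derivative dt f x \<tau>) (at \<tau>)"
  unfolding C2fun_def dt_def by (simp add: DERIV_deriv_iff_real_differentiable)

lemma c2_dxdx: "C2fun f \<Longrightarrow> ((\<lambda>y. dx f y t) has_real_derivative dx (dx f) y t) (at y)"
  unfolding C2fun_def by (simp add: DERIV_deriv_iff_real_differentiable dx_def[of "dx f"])

lemma c2_dtdx: "C2fun f \<Longrightarrow> ((\<lambda>\<tau>. dx f x \<tau>) has_real_derivative dt (dx f) x \<tau>) (at \<tau>)"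
  unfolding C2fun_def by (simp add: DERIV_deriv_iff_real_differentiable dt_def[of "dx f"])

lemma c2_cont:
  assumes "C2fun f"
  shows "continuous_on UNIV (\<lambda>(x, t). f x t)" "continuous_on UNIV (\<lambda>(x, t). dx f x t)"
    "continuous_on UNIV (\<lambda>(x, t). dt f x t)" "continuous_on UNIV (\<lambda>(x, t). dx (dx f) x t)"
    "continuous_on UNIV (\<lambda>(x, t). dt (dx f) x t)"
  using assms unfolding C2fun_def by auto

lemma er_slice: "eta_regular eta \<Longrightarrow> C2fun (slice eta s)"
  unfolding eta_regular_def by auto

lemma er_dx: "eta_regular eta \<Longrightarrow> ((\<lambda>y. eta y t s) has_real_derivative dx (slice eta s) y t) (at y)"
  using c2_dx[OF er_slice, of eta s t y] by (simp add: slice_def)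

lemma er_dxdx: "eta_regular eta \<Longrightarrow> ((\<lambda>y. dx (slice eta s) y t) has_real_derivative dx (dx (slice eta s)) y t) (at y)"
  using c2_dxdx[OF er_slice, of eta s t y] by simp

lemma er_dt: "eta_regular eta \<Longrightarrow> ((\<lambda>\<tau>. eta x \<tau> s) has_real_derivative dt (slice eta s) x \<tau>) (at \<tau>)"
  using c2_dt[OF er_slice, of eta s x \<tau>] by (simp add: slice_def)

lemma er_ds: "eta_regular eta \<Longrightarrow> ((\<lambda>\<sigma>. eta x t \<sigma>) has_real_derivative ds eta x t \<sigma>) (at \<sigma>)"
  unfolding eta_regular_def ds_def by (simp add: DERIV_deriv_iff_real_differentiable)

lemma er_cont:
  assumes "eta_regular eta"
  shows "continuous_on UNIV (\<lambda>(x, t, s). eta x t s)"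
    "continuous_on UNIV (\<lambda>(x, t, s). dx (slice eta s) x t)"
    "continuous_on UNIV (\<lambda>(x, t, s). dx (dx (slice eta s)) x t)"
    "continuous_on UNIV (\<lambda>(x, t, s). dt (slice eta s) x t)"
    "continuous_on UNIV (\<lambda>(x, t, s). ds eta x t s)"
  using assms unfolding eta_regular_def by auto

lemma er_bound:
  assumes "eta_regular eta"
  obtains B where "B \<ge> 0" "\<And>x \<tau> s. x \<in> {0..pi} \<Longrightarrow> \<tau> \<in> {a..b} \<Longrightarrow> s \<ge> 0 \<Longrightarrow>
        \<bar>eta x \<tau> s\<bar> \<le> B * (1 + s) \<and>
        \<bar>dx (slice eta s) x \<tau>\<bar> \<le> B * (1 + s) \<and>
        \<bar>dx (dx (slice eta s)) x \<tau>\<bar> \<le> B * (1 + s) \<and>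
        \<bar>dt (slice eta s) x \<tau>\<bar> \<le> B * (1 + s) \<and>
        \<bar>ds eta x \<tau> s\<bar> \<le> B * (1 + s)"
proof -
  obtain B where B: "\<forall>x\<in>{0..pi}. \<forall>t\<in>{a..b}. \<forall>s\<ge>0.
        \<bar>eta x t s\<bar> \<le> B * (1 + s) \<and>
        \<bar>dx (slice eta s) x t\<bar> \<le> B * (1 + s) \<and>
        \<bar>dx (dx (slice eta s)) x t\<bar> \<le> B * (1 + s) \<and>
        \<bar>dt (slice eta s) x t\<bar> \<le> B * (1 + s) \<and>
        \<bar>ds eta x t s\<bar> \<le> B * (1 + s)"
    using assms unfolding eta_regular_def by blast
  show ?thesis
  proof (cases "a \<le> b")
    case True
    have a0: "(0::real) \<in> {0..pi}" by simp
    have aa: "a \<in> {a..b}" using True by simp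
    have "\<bar>eta 0 a 0\<bar> \<le> B * (1 + 0)" using B a0 aa by blast
    then have "0 \<le> B * (1 + 0)" by (rule order_trans[OF abs_ge_zero])
    then have "B \<ge> 0" by simp
    then show ?thesis using that B by blast
  next
    case False
    then show ?thesis using that[of 0] by auto
  qed
qed

lemma cont_bound:
  fixes f :: "real \<times> real \<Rightarrow> real"
  assumes "continuous_on UNIV f"
  obtains C where "C \<ge> 0" "\<And>x y. x \<in> {a..b} \<Longrightarrow> y \<in> {c..d} \<Longrightarrow> \<bar>f (x, y)\<bar> \<le> C"
proof -
  have "compact (f ` ({a..b} \<times> {c..d}))"
    by (rule compact_continuous_image) (auto intro: continuous_on_subset[OF assms] compact_Times)
  then obtain C where "C > 0" "\<And>z. z \<in> f ` ({a..b} \<times> {c..d}) \<Longrightarrow> norm z \<le> C"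
    using compact_imp_bounded bounded_pos by metis
  then show ?thesis using that[of C] by force
qed


locale setting = kap +
  fixes rho J c mu b alpha xi beta :: real
    and u phi theta :: "real \<Rightarrow> real \<Rightarrow> real" and eta :: "real \<Rightarrow> real \<Rightarrow> real \<Rightarrow> real" and t :: real
  assumes cpos: "c > 0"
    and sol: "is_solution rho J c mu b alpha xi beta \<kappa> u phi theta eta"
    and tpos: "t > 0"
begin

lemma C2th: "C2fun theta" and C2ph: "C2fun phi" and er: "eta_regular eta"
  using sol unfolding is_solution_def by auto

lemma pde_heat: "x \<in> {0<..<pi} \<Longrightarrow> c * dt theta x t = - beta * dt (dx phi) x t
                           + integral {0..} (\<lambda>s. \<kappa> s * dx (dx (slice eta s)) x t)"
  using sol tpos unfolding is_solution_def by auto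

lemma pde_eta: "x \<in> {0<..<pi} \<Longrightarrow> s > 0 \<Longrightarrow> dt (slice eta s) x t = theta x t - ds eta x t s"
  using sol tpos unfolding is_solution_def by auto

lemma bc0: "s \<ge> 0 \<Longrightarrow> eta 0 t s = 0" and bcpi: "s \<ge> 0 \<Longrightarrow> eta pi t s = 0"
  and bcs: "x \<in> {0..pi} \<Longrightarrow> eta x t 0 = 0"
  using sol tpos unfolding is_solution_def by auto

lemma cont_th [continuous_intros]: "continuous_on S a \<Longrightarrow> continuous_on S b' \<Longrightarrow> continuous_on S (\<lambda>p. theta (a p) (b' p))"
  by (rule cont2c[OF c2_cont(1)[OF C2th]])
lemma cont_dtth [continuous_intros]: "continuous_on S a \<Longrightarrow> continuous_on S b' \<Longrightarrow> continuous_on S (\<lambda>p. dt theta (a p) (b' p))"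
  by (rule cont2c[OF c2_cont(3)[OF C2th]])
lemma cont_ph [continuous_intros]: "continuous_on S a \<Longrightarrow> continuous_on S b' \<Longrightarrow> continuous_on S (\<lambda>p. phi (a p) (b' p))"
  by (rule cont2c[OF c2_cont(1)[OF C2ph]])
lemma cont_dxph [continuous_intros]: "continuous_on S a \<Longrightarrow> continuous_on S b' \<Longrightarrow> continuous_on S (\<lambda>p. dx phi (a p) (b' p))"
  by (rule cont2c[OF c2_cont(2)[OF C2ph]])
lemma cont_dtph [continuous_intros]: "continuous_on S a \<Longrightarrow> continuous_on S b' \<Longrightarrow> continuous_on S (\<lambda>p. dt phi (a p) (b' p))"
  by (rule cont2c[OF c2_cont(3)[OF C2ph]])
lemma cont_dtdxph [continuous_intros]: "continuous_on S a \<Longrightarrow> continuous_on S b' \<Longrightarrow> continuous_on S (\<lambda>p. dt (dx phi) (a p) (b' p))"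
  by (rule cont2c[OF c2_cont(5)[OF C2ph]])

lemma cont_eta [continuous_intros]: "continuous_on S a \<Longrightarrow> continuous_on S b' \<Longrightarrow> continuous_on S c' \<Longrightarrow> continuous_on S (\<lambda>p. eta (a p) (b' p) (c' p))"
  by (rule cont3c[OF er_cont(1)[OF er]])
lemma cont_etax [continuous_intros]: "continuous_on S a \<Longrightarrow> continuous_on S b' \<Longrightarrow> continuous_on S c' \<Longrightarrow> continuous_on S (\<lambda>p. dx (slice eta (c' p)) (a p) (b' p))"
  using cont3c[OF er_cont(2)[OF er], of S a b' c'] by simp
lemma cont_etaxx [continuous_intros]: "continuous_on S a \<Longrightarrow> continuous_on S b' \<Longrightarrow> continuous_on S c' \<Longrightarrow> continuous_on S (\<lambda>p. dx (dx (slice eta (c' p))) (a p) (b' p))"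
  using cont3c[OF er_cont(3)[OF er], of S a b' c'] by simp
lemma cont_etat [continuous_intros]: "continuous_on S a \<Longrightarrow> continuous_on S b' \<Longrightarrow> continuous_on S c' \<Longrightarrow> continuous_on S (\<lambda>p. dt (slice eta (c' p)) (a p) (b' p))"
  using cont3c[OF er_cont(4)[OF er], of S a b' c'] by simp
lemma cont_etas [continuous_intros]: "continuous_on S a \<Longrightarrow> continuous_on S b' \<Longrightarrow> continuous_on S c' \<Longrightarrow> continuous_on S (\<lambda>p. ds eta (a p) (b' p) (c' p))"
  by (rule cont3c[OF er_cont(5)[OF er]])

lemma cont_k [continuous_intros]: "continuous_on S a \<Longrightarrow> a ` S \<subseteq> {0..} \<Longrightarrow> continuous_on S (\<lambda>p. \<kappa> (a p))"
  by (rule continuous_on_compose2[OF kc])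
lemma cont_k' [continuous_intros]: "continuous_on S a \<Longrightarrow> a ` S \<subseteq> {0..} \<Longrightarrow> continuous_on S (\<lambda>p. \<kappa>' (a p))"
  by (rule continuous_on_compose2[OF kdc])

definition "Be = (SOME B. B \<ge> 0 \<and> (\<forall>x \<tau> s. x \<in> {0..pi} \<longrightarrow> \<tau> \<in> {t-1..t+1} \<longrightarrow> s \<ge> 0 \<longrightarrow>
        \<bar>eta x \<tau> s\<bar> \<le> B * (1 + s) \<and>
        \<bar>dx (slice eta s) x \<tau>\<bar> \<le> B * (1 + s) \<and>
        \<bar>dx (dx (slice eta s)) x \<tau>\<bar> \<le> B * (1 + s) \<and>
        \<bar>dt (slice eta s) x \<tau>\<bar> \<le> B * (1 + s) \<and>
        \<bar>ds eta x \<tau> s\<bar> \<le> B * (1 + s)))"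

lemma Be: "Be \<ge> 0 \<and> (\<forall>x \<tau> s. x \<in> {0..pi} \<longrightarrow> \<tau> \<in> {t-1..t+1} \<longrightarrow> s \<ge> 0 \<longrightarrow>
        \<bar>eta x \<tau> s\<bar> \<le> Be * (1 + s) \<and>
        \<bar>dx (slice eta s) x \<tau>\<bar> \<le> Be * (1 + s) \<and>
        \<bar>dx (dx (slice eta s)) x \<tau>\<bar> \<le> Be * (1 + s) \<and>
        \<bar>dt (slice eta s) x \<tau>\<bar> \<le> Be * (1 + s) \<and>
        \<bar>ds eta x \<tau> s\<bar> \<le> Be * (1 + s))"
  unfolding Be_def
proof (rule someI_ex)
  obtain B where "B \<ge> 0" "\<And>x \<tau> s. x \<in> {0..pi} \<Longrightarrow> \<tau> \<in> {t-1..t+1} \<Longrightarrow> s \<ge> 0 \<Longrightarrow>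
        \<bar>eta x \<tau> s\<bar> \<le> B * (1 + s) \<and>
        \<bar>dx (slice eta s) x \<tau>\<bar> \<le> B * (1 + s) \<and>
        \<bar>dx (dx (slice eta s)) x \<tau>\<bar> \<le> B * (1 + s) \<and>
        \<bar>dt (slice eta s) x \<tau>\<bar> \<le> B * (1 + s) \<and>
        \<bar>ds eta x \<tau> s\<bar> \<le> B * (1 + s)"
    using er_bound[OF er, of "t-1" "t+1"] by blast
  then show "\<exists>B. B \<ge> 0 \<and> (\<forall>x \<tau> s. x \<in> {0..pi} \<longrightarrow> \<tau> \<in> {t-1..t+1} \<longrightarrow> s \<ge> 0 \<longrightarrow>
        \<bar>eta x \<tau> s\<bar> \<le> B * (1 + s) \<and>
        \<bar>dx (slice eta s) x \<tau>\<bar> \<le> B * (1 + s) \<and>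
        \<bar>dx (dx (slice eta s)) x \<tau>\<bar> \<le> B * (1 + s) \<and>
        \<bar>dt (slice eta s) x \<tau>\<bar> \<le> B * (1 + s) \<and>
        \<bar>ds eta x \<tau> s\<bar> \<le> B * (1 + s))" by blast
qed

lemma Be0: "Be \<ge> 0" using Be by blast
lemma Be_eta: "x \<in> {0..pi} \<Longrightarrow> \<tau> \<in> {t-1..t+1} \<Longrightarrow> s \<ge> 0 \<Longrightarrow> \<bar>eta x \<tau> s\<bar> \<le> Be * (1 + s)"
  using Be by blast
lemma Be_x: "x \<in> {0..pi} \<Longrightarrow> \<tau> \<in> {t-1..t+1} \<Longrightarrow> s \<ge> 0 \<Longrightarrow> \<bar>dx (slice eta s) x \<tau>\<bar> \<le> Be * (1 + s)"
  using Be by blast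
lemma Be_xx: "x \<in> {0..pi} \<Longrightarrow> \<tau> \<in> {t-1..t+1} \<Longrightarrow> s \<ge> 0 \<Longrightarrow> \<bar>dx (dx (slice eta s)) x \<tau>\<bar> \<le> Be * (1 + s)"
  using Be by blast
lemma Be_t: "x \<in> {0..pi} \<Longrightarrow> \<tau> \<in> {t-1..t+1} \<Longrightarrow> s \<ge> 0 \<Longrightarrow> \<bar>dt (slice eta s) x \<tau>\<bar> \<le> Be * (1 + s)"
  using Be by blast
lemma Be_s: "x \<in> {0..pi} \<Longrightarrow> \<tau> \<in> {t-1..t+1} \<Longrightarrow> s \<ge> 0 \<Longrightarrow> \<bar>ds eta x \<tau> s\<bar> \<le> Be * (1 + s)"
  using Be by blast

definition "Cb = (SOME C. C \<ge> 0 \<and> (\<forall>x y. x \<in> {0..pi} \<longrightarrow> y \<in> {t-1..t+1} \<longrightarrow>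
      \<bar>\<bar>theta x y\<bar> + \<bar>dt theta x y\<bar> + \<bar>dt phi x y\<bar>\<bar> \<le> C))"

lemma Cb: "Cb \<ge> 0 \<and> (\<forall>x y. x \<in> {0..pi} \<longrightarrow> y \<in> {t-1..t+1} \<longrightarrow>
      \<bar>\<bar>theta x y\<bar> + \<bar>dt theta x y\<bar> + \<bar>dt phi x y\<bar>\<bar> \<le> Cb)"
  unfolding Cb_def
proof (rule someI_ex)
  have "continuous_on UNIV (\<lambda>p. \<bar>theta (fst p) (snd p)\<bar> + \<bar>dt theta (fst p) (snd p)\<bar> + \<bar>dt phi (fst p) (snd p)\<bar>)"
    by (intro continuous_intros)
  from cont_bound[OF this, of 0 pi "t-1" "t+1"] obtain C where "C \<ge> 0"
    "\<And>x y. x \<in> {0..pi} \<Longrightarrow> y \<in> {t-1..t+1} \<Longrightarrow> \<bar>\<bar>theta x y\<bar> + \<bar>dt theta x y\<bar> + \<bar>dt phi x y\<bar>\<bar> \<le> C"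
    by auto
  then show "\<exists>C. C \<ge> 0 \<and> (\<forall>x y. x \<in> {0..pi} \<longrightarrow> y \<in> {t-1..t+1} \<longrightarrow>
      \<bar>\<bar>theta x y\<bar> + \<bar>dt theta x y\<bar> + \<bar>dt phi x y\<bar>\<bar> \<le> C)" by blast
qed

lemma Cb0: "Cb \<ge> 0" using Cb by blast
lemma Cb_th: "x \<in> {0..pi} \<Longrightarrow> y \<in> {t-1..t+1} \<Longrightarrow> \<bar>theta x y\<bar> \<le> Cb"
  using Cb by fastforce
lemma Cb_dtth: "x \<in> {0..pi} \<Longrightarrow> y \<in> {t-1..t+1} \<Longrightarrow> \<bar>dt theta x y\<bar> \<le> Cb"
  using Cb by fastforce
lemma Cb_dtph: "x \<in> {0..pi} \<Longrightarrow> y \<in> {t-1..t+1} \<Longrightarrow> \<bar>dt phi x y\<bar> \<le> Cb"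
  using Cb by fastforce

end


lemma ibound:
  fixes f :: "real \<Rightarrow> real"
  assumes "continuous_on {a..b} f" "a \<le> b" "\<And>x. x \<in> {a..b} \<Longrightarrow> \<bar>f x\<bar> \<le> C"
  shows "\<bar>integral {a..b} f\<bar> \<le> (b - a) * C"
proof -
  have "\<bar>integral {a..b} f\<bar> \<le> integral {a..b} (\<lambda>x::real. C)"
    by (rule iabs[OF integrable_continuous_interval[OF assms(1)] iconst assms(3)])
  then show ?thesis using assms(2) by simp
qed

lemma dmult: "(f has_real_derivative D) (at x) \<Longrightarrow> (g has_real_derivative E) (at x) \<Longrightarrow>
    ((\<lambda>x. f x * g x) has_real_derivative D * g x + f x * E) (at x)"
  using DERIV_mult'[of f D x UNIV g E] by (simp add: add.commute)

lemma abs1: "\<bar>\<tau> - t\<bar> < (1::real) \<Longrightarrow> \<tau> \<in> {t-1..t+1}"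
  by (simp add: abs_less_iff)

context setting begin

definition "P \<tau> s = integral {0..pi} (\<lambda>x. theta x \<tau> * eta x \<tau> s)"
definition "P' \<tau> s = integral {0..pi} (\<lambda>x. dt theta x \<tau> * eta x \<tau> s + theta x \<tau> * dt (slice eta s) x \<tau>)"

lemma P_deriv: "((\<lambda>\<tau>. P \<tau> s) has_real_derivative P' \<tau> s) (at \<tau>)"
proof -
  have "((\<lambda>\<tau>. integral (cbox 0 pi) (\<lambda>x. theta x \<tau> * eta x \<tau> s)) has_field_derivative
        integral (cbox 0 pi) (\<lambda>x. dt theta x \<tau> * eta x \<tau> s + theta x \<tau> * dt (slice eta s) x \<tau>)) (at \<tau> within UNIV)"
  proof (rule leibniz_rule_field_derivative[where fx = "\<lambda>\<tau> x. dt theta x \<tau> * eta x \<tau> s + theta x \<tau> * dt (slice eta s) x \<tau>"])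
    show "((\<lambda>\<tau>. theta x \<tau> * eta x \<tau> s) has_field_derivative dt theta x \<tau>' * eta x \<tau>' s + theta x \<tau>' * dt (slice eta s) x \<tau>') (at \<tau>' within UNIV)" for \<tau>' x
      using dmult[OF c2_dt[OF C2th] er_dt[OF er]] by simp
    show "(\<lambda>x. theta x \<tau>' * eta x \<tau>' s) integrable_on cbox 0 pi" for \<tau>'
      by (rule integrable_continuous) (intro continuous_intros)
    show "continuous_on (UNIV \<times> cbox 0 pi) (\<lambda>(\<tau>, x). dt theta x \<tau> * eta x \<tau> s + theta x \<tau> * dt (slice eta s) x \<tau>)"
      unfolding split_beta by (intro continuous_intros)
  qed auto
  then show ?thesis by (simp add: P_def P'_def cbox_interval)
qed

lemma P_cont: "continuous_on {0..} (\<lambda>s. P \<tau> s)"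
proof -
  have "continuous_on ({0..} \<times> cbox 0 pi) (\<lambda>(s, x). theta x \<tau> * eta x \<tau> s)"
    unfolding split_beta by (intro continuous_intros)
  from integral_continuous_on_param[OF this] show ?thesis by (simp add: P_def cbox_interval)
qed

lemma P'_cont: "continuous_on {0..} (\<lambda>s. P' \<tau> s)"
proof -
  have "continuous_on ({0..} \<times> cbox 0 pi) (\<lambda>(s, x). dt theta x \<tau> * eta x \<tau> s + theta x \<tau> * dt (slice eta s) x \<tau>)"
    unfolding split_beta by (intro continuous_intros)
  from integral_continuous_on_param[OF this] show ?thesis by (simp add: P'_def cbox_interval)
qed

lemma P_bound: assumes "\<tau> \<in> {t-1..t+1}" "s \<ge> 0" shows "\<bar>P \<tau> s\<bar> \<le> pi * (Cb * (Be * (1 + s)))"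
proof -
  have "\<bar>P \<tau> s\<bar> \<le> (pi - 0) * (Cb * (Be * (1 + s)))"
    unfolding P_def
  proof (rule ibound)
    show "continuous_on {0..pi} (\<lambda>x. theta x \<tau> * eta x \<tau> s)" by (intro continuous_intros)
    show "\<bar>theta x \<tau> * eta x \<tau> s\<bar> \<le> Cb * (Be * (1 + s))" if "x \<in> {0..pi}" for x
      unfolding abs_mult by (rule mult_mono) (use Cb_th[OF that assms(1)] Be_eta[OF that assms] Cb0 in auto)
  qed simp
  then show ?thesis by simp
qed

lemma P'_bound: assumes "\<tau> \<in> {t-1..t+1}" "s \<ge> 0" shows "\<bar>P' \<tau> s\<bar> \<le> pi * (2 * (Cb * (Be * (1 + s))))"
proof -
  have "\<bar>P' \<tau> s\<bar> \<le> (pi - 0) * (2 * (Cb * (Be * (1 + s))))"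
    unfolding P'_def
  proof (rule ibound)
    show "continuous_on {0..pi} (\<lambda>x. dt theta x \<tau> * eta x \<tau> s + theta x \<tau> * dt (slice eta s) x \<tau>)" by (intro continuous_intros)
    show "\<bar>dt theta x \<tau> * eta x \<tau> s + theta x \<tau> * dt (slice eta s) x \<tau>\<bar> \<le> 2 * (Cb * (Be * (1 + s)))" if x: "x \<in> {0..pi}" for x
    proof -
      have "\<bar>dt theta x \<tau> * eta x \<tau> s\<bar> \<le> Cb * (Be * (1 + s))"
        unfolding abs_mult by (rule mult_mono) (use Cb_dtth[OF x assms(1)] Be_eta[OF x assms] Cb0 in auto)
      moreover have "\<bar>theta x \<tau> * dt (slice eta s) x \<tau>\<bar> \<le> Cb * (Be * (1 + s))"
        unfolding abs_mult by (rule mult_mono) (use Cb_th[OF x assms(1)] Be_t[OF x assms] Cb0 in auto)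
      ultimately show ?thesis by linarith
    qed
  qed simp
  then show ?thesis by simp
qed

lemma k_nonneg: "s \<ge> 0 \<Longrightarrow> \<kappa> s \<ge> 0" using kpos[of s] by simp

lemma kbound_int: "(\<lambda>s. C * (\<kappa> s * (1 + s))) integrable_on {0..}"
  by (rule imul[OF k_int1])

lemma F1_eq: "F1 c \<kappa> theta eta = (\<lambda>\<tau>. - (2 * c / g0 \<kappa>) * integral {0..} (\<lambda>s. \<kappa> s * P \<tau> s))"
  by (rule ext) (simp add: F1_def L2ip_def P_def)

lemma F1_deriv:
  "(F1 c \<kappa> theta eta has_real_derivative (- (2 * c / g0 \<kappa>)) * integral {0..} (\<lambda>s. \<kappa> s * P' t s)) (at t)"
  unfolding F1_eq
proof (rule DERIV_cmult, rule diff_under_integral[where r=1 and h="\<lambda>s. (2 * pi * Cb * Be) * (\<kappa> s * (1 + s))"])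
  show "((\<lambda>\<tau>. \<kappa> s * P \<tau> s) has_real_derivative \<kappa> s * P' \<tau> s) (at \<tau>)" for s \<tau>
    by (rule DERIV_cmult[OF P_deriv])
  show "\<bar>\<kappa> s * P' \<tau> s\<bar> \<le> 2 * pi * Cb * Be * (\<kappa> s * (1 + s))" if "s \<in> {0..}" "\<bar>\<tau> - t\<bar> < 1" for s \<tau>
  proof -
    have "\<bar>\<kappa> s * P' \<tau> s\<bar> \<le> \<kappa> s * (pi * (2 * (Cb * (Be * (1 + s)))))"
      unfolding abs_mult using P'_bound[OF abs1[OF that(2)], of s] that k_nonneg[of s] by (intro mult_mono) auto
    then show ?thesis by (simp add: algebra_simps)
  qed
  show "(\<lambda>s. 2 * pi * Cb * Be * (\<kappa> s * (1 + s))) integrable_on {0..}" by (rule kbound_int)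
  show "(\<lambda>s. \<kappa> s * P \<tau> s) integrable_on {0..}" if "\<bar>\<tau> - t\<bar> < 1" for \<tau>
  proof (rule cbi[OF _ _ kbound_int[of "pi * Cb * Be"]])
    show "continuous_on {0..} (\<lambda>s. \<kappa> s * P \<tau> s)" by (intro continuous_intros P_cont) auto
    show "\<bar>\<kappa> s * P \<tau> s\<bar> \<le> pi * Cb * Be * (\<kappa> s * (1 + s))" if "s \<in> {0..}" for s
    proof -
      have "\<bar>\<kappa> s * P \<tau> s\<bar> \<le> \<kappa> s * (pi * (Cb * (Be * (1 + s))))"
        unfolding abs_mult using P_bound[OF abs1[OF \<open>\<bar>\<tau> - t\<bar> < 1\<close>], of s] that k_nonneg[of s] by (intro mult_mono) auto
      then show ?thesis by (simp add: algebra_simps)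
    qed
  qed auto
  show "(\<lambda>s. \<kappa> s * P' t s) integrable_on {0..}"
  proof (rule cbi[OF _ _ kbound_int[of "2 * pi * Cb * Be"]])
    show "continuous_on {0..} (\<lambda>s. \<kappa> s * P' t s)" by (intro continuous_intros P'_cont) auto
    show "\<bar>\<kappa> s * P' t s\<bar> \<le> 2 * pi * Cb * Be * (\<kappa> s * (1 + s))" if "s \<in> {0..}" for s
    proof -
      have "\<bar>\<kappa> s * P' t s\<bar> \<le> \<kappa> s * (pi * (2 * (Cb * (Be * (1 + s)))))"
        unfolding abs_mult using P'_bound[of t s] that k_nonneg[of s] by (intro mult_mono) auto
      then show ?thesis by (simp add: algebra_simps)
    qed
  qed auto
qed simp

end


lemma intmul: "integral S (\<lambda>x. c * f x) = c * integral S (f :: 'a::euclidean_space \<Rightarrow> real)"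
  using integral_cmul[of S c f] by simp

lemma intmulr: "integral S (\<lambda>x. f x * c) = integral S (f :: 'a::euclidean_space \<Rightarrow> real) * c"
  using intmul[of S c f] by (simp add: mult.commute)

lemma neg0pi: "negligible {0, pi}" by simp

context setting begin

definition "A s = integral {0..pi} (\<lambda>x. dt theta x t * eta x t s)"
definition "Bt s = integral {0..pi} (\<lambda>x. theta x t * dt (slice eta s) x t)"
definition "Q s = integral {0..pi} (\<lambda>x. theta x t * eta x t s)"
definition "Q' s = integral {0..pi} (\<lambda>x. theta x t * ds eta x t s)"
definition "nTh = integral {0..pi} (\<lambda>x. (theta x t)^2)"

lemma tt: "t \<in> {t-1..t+1}" by simp

lemma P'_split: "P' t s = A s + Bt s"
  unfolding P'_def A_def Bt_def
  by (rule integral_add) (auto intro!: integrable_continuous_interval continuous_intros)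

lemma Bt_eq: assumes "s > 0" shows "Bt s = nTh - Q' s"
proof -
  have "Bt s = integral {0..pi} (\<lambda>x. (theta x t)^2 - theta x t * ds eta x t s)"
    unfolding Bt_def
  proof (rule integral_spike[OF neg0pi])
    fix x assume "x \<in> {0..pi} - {0, pi}"
    then have "x \<in> {0<..<pi}" by auto
    then show "(theta x t)^2 - theta x t * ds eta x t s = theta x t * dt (slice eta s) x t"
    proof -
      have e: "dt (slice eta s) x t = theta x t - ds eta x t s" using pde_eta[of x s] assms \<open>x \<in> {0<..<pi}\<close> by blast
      show ?thesis unfolding e by (simp add: power2_eq_square right_diff_distrib)
    qed
  qed
  also have "\<dots> = nTh - Q' s"
    unfolding nTh_def Q'_def
    by (rule integral_diff) (auto intro!: integrable_continuous_interval continuous_intros)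
  finally show ?thesis .
qed

lemma A_cont: "continuous_on {0..} A"
proof -
  have "continuous_on ({0..} \<times> cbox 0 pi) (\<lambda>(s, x). dt theta x t * eta x t s)"
    unfolding split_beta by (intro continuous_intros)
  from integral_continuous_on_param[OF this] show ?thesis by (simp add: A_def cbox_interval)
qed

lemma Bt_cont: "continuous_on {0..} Bt"
proof -
  have "continuous_on ({0..} \<times> cbox 0 pi) (\<lambda>(s, x). theta x t * dt (slice eta s) x t)"
    unfolding split_beta by (intro continuous_intros)
  from integral_continuous_on_param[OF this] show ?thesis by (simp add: Bt_def cbox_interval)
qed

lemma Q'_cont: "continuous_on {0..} Q'"
proof -
  have "continuous_on ({0..} \<times> cbox 0 pi) (\<lambda>(s, x). theta x t * ds eta x t s)"
    unfolding split_beta by (intro continuous_intros)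
  from integral_continuous_on_param[OF this] show ?thesis by (simp add: Q'_def cbox_interval)
qed

lemma Q_cont: "continuous_on {0..} Q"
  using P_cont[of t] by (simp add: P_def Q_def[abs_def])

lemma Q_deriv: "(Q has_real_derivative Q' s) (at s)"
proof -
  have "((\<lambda>s. integral (cbox 0 pi) (\<lambda>x. theta x t * eta x t s)) has_field_derivative
        integral (cbox 0 pi) (\<lambda>x. theta x t * ds eta x t s)) (at s within UNIV)"
  proof (rule leibniz_rule_field_derivative[where fx = "\<lambda>s x. theta x t * ds eta x t s"])
    show "((\<lambda>s. theta x t * eta x t s) has_field_derivative theta x t * ds eta x t s') (at s' within UNIV)" for s' x
      using DERIV_cmult[OF er_ds[OF er, of x t s'], of "theta x t"] by simp
    show "(\<lambda>x. theta x t * eta x t s') integrable_on cbox 0 pi" for s'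
      by (rule integrable_continuous) (intro continuous_intros)
    show "continuous_on (UNIV \<times> cbox 0 pi) (\<lambda>(s, x). theta x t * ds eta x t s)"
      unfolding split_beta by (intro continuous_intros)
  qed auto
  then show ?thesis by (simp add: Q_def[abs_def] Q'_def cbox_interval)
qed

lemma Q0: "Q 0 = 0"
proof -
  have "Q 0 = integral {0..pi} (\<lambda>x::real. 0)"
    unfolding Q_def by (rule integral_cong) (simp add: bcs)
  then show ?thesis by simp
qed

lemma gen_bound:
  assumes "continuous_on {0..pi} f" "\<And>x. x \<in> {0..pi} \<Longrightarrow> \<bar>f x\<bar> \<le> C1 * (C2 * (1 + s))"
  shows "\<bar>integral {0..pi} f\<bar> \<le> pi * C1 * C2 * (1 + s)"
  using ibound[OF assms(1) _ assms(2)] by (simp add: algebra_simps)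

lemma A_bound: "s \<ge> 0 \<Longrightarrow> \<bar>A s\<bar> \<le> pi * Cb * Be * (1 + s)"
  unfolding A_def
  by (rule gen_bound) (auto intro!: continuous_intros mult_mono Cb_dtth Be_eta Cb0 simp: abs_mult)

lemma Bt_bound: "s \<ge> 0 \<Longrightarrow> \<bar>Bt s\<bar> \<le> pi * Cb * Be * (1 + s)"
  unfolding Bt_def
  by (rule gen_bound) (auto intro!: continuous_intros mult_mono Cb_th Be_t Cb0 simp: abs_mult)

lemma Q_bound: "s \<ge> 0 \<Longrightarrow> \<bar>Q s\<bar> \<le> pi * Cb * Be * (1 + s)"
  unfolding Q_def
  by (rule gen_bound) (auto intro!: continuous_intros mult_mono Cb_th Be_eta Cb0 simp: abs_mult)

lemma Q'_bound: "s \<ge> 0 \<Longrightarrow> \<bar>Q' s\<bar> \<le> pi * Cb * Be * (1 + s)"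
  unfolding Q'_def
  by (rule gen_bound) (auto intro!: continuous_intros mult_mono Cb_th Be_s Cb0 simp: abs_mult)

end


context kap begin

lemma kd_int1: "(\<lambda>s. - \<kappa>' s * (1 + s)) integrable_on {0..}"
proof (rule cbi[OF _ _ kd_int2])
  show "continuous_on {0..} (\<lambda>s. - \<kappa>' s * (1 + s))" by (intro continuous_intros kdc)
  show "\<bar>- \<kappa>' s * (1 + s)\<bar> \<le> - \<kappa>' s * (1 + s)^2" if "s \<in> {0..}" for s
  proof -
    have k: "- \<kappa>' s \<ge> 0" using kd_nonpos[of s] that by simp
    have "(1 + s) * 1 \<le> (1 + s) * (1 + s)" using that by (intro mult_left_mono) auto
    then have "- \<kappa>' s * (1 + s) \<le> - \<kappa>' s * (1 + s)^2"
      using k by (intro mult_left_mono) (auto simp: power2_eq_square)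
    moreover have "0 \<le> - \<kappa>' s * (1 + s)" using k that by (intro mult_nonneg_nonneg) auto
    ultimately show ?thesis by simp
  qed
qed auto

lemma kd_int0: "(\<lambda>s. - \<kappa>' s) integrable_on {0..}"
proof (rule cbi[OF _ _ kd_int1])
  show "continuous_on {0..} (\<lambda>s. - \<kappa>' s)" by (intro continuous_intros kdc)
  show "\<bar>- \<kappa>' s\<bar> \<le> - \<kappa>' s * (1 + s)" if "s \<in> {0..}" for s
  proof -
    have k: "- \<kappa>' s \<ge> 0" using kd_nonpos[of s] that by simp
    have "- \<kappa>' s * 1 \<le> - \<kappa>' s * (1 + s)" using k that by (intro mult_left_mono) auto
    then show ?thesis using k by simp
  qed
qed auto

end

context setting begin

lemma kdbound_int: "(\<lambda>s. C * (- \<kappa>' s * (1 + s))) integrable_on {0..}"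
  by (rule imul[OF kd_int1])

lemma kQ'_int: "(\<lambda>s. \<kappa> s * Q' s) integrable_on {0..}"
proof (rule cbi[OF _ _ kbound_int[of "pi * Cb * Be"]])
  show "continuous_on {0..} (\<lambda>s. \<kappa> s * Q' s)" by (intro continuous_intros Q'_cont) auto
  show "\<bar>\<kappa> s * Q' s\<bar> \<le> pi * Cb * Be * (\<kappa> s * (1 + s))" if "s \<in> {0..}" for s
  proof -
    have "\<bar>\<kappa> s * Q' s\<bar> \<le> \<kappa> s * (pi * Cb * Be * (1 + s))"
      unfolding abs_mult using Q'_bound[of s] that k_nonneg[of s] by (intro mult_mono) auto
    then show ?thesis by (simp add: algebra_simps)
  qed
qed auto

lemma kdQ_int: "(\<lambda>s. \<kappa>' s * Q s) integrable_on {0..}"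
proof (rule cbi[OF _ _ kdbound_int[of "pi * Cb * Be"]])
  show "continuous_on {0..} (\<lambda>s. \<kappa>' s * Q s)" by (intro continuous_intros Q_cont) auto
  show "\<bar>\<kappa>' s * Q s\<bar> \<le> pi * Cb * Be * (- \<kappa>' s * (1 + s))" if "s \<in> {0..}" for s
  proof -
    have "\<bar>\<kappa>' s * Q s\<bar> \<le> (- \<kappa>' s) * (pi * Cb * Be * (1 + s))"
      unfolding abs_mult using Q_bound[of s] that kd_nonpos[of s] by (intro mult_mono) auto
    then show ?thesis by (simp add: algebra_simps)
  qed
qed auto

lemma kQ: "integral {0..} (\<lambda>s. \<kappa> s * Q' s) = - integral {0..} (\<lambda>s. \<kappa>' s * Q s)"
proof -
  have ibp: "integral {0..real n} (\<lambda>s. \<kappa>' s * Q s) = \<kappa> (real n) * Q (real n) - integral {0..real n} (\<lambda>s. \<kappa> s * Q' s)" for n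
  proof -
    define T where "T = real n"
    have T: "0 \<le> T" by (simp add: T_def)
    define y where "y = \<kappa> T * Q T - \<kappa> 0 * Q 0 - integral {0..T} (\<lambda>s. \<kappa> s * Q' s)"
    have "((\<lambda>s. \<kappa>' s * Q s) has_integral y) {0..T}"
    proof (rule integration_by_parts_interior[OF bounded_bilinear_mult T])
      show "continuous_on {0..T} \<kappa>" by (rule continuous_on_subset[OF kc]) auto
      show "continuous_on {0..T} Q" by (rule continuous_on_subset[OF Q_cont]) auto
      show "(\<kappa> has_vector_derivative \<kappa>' x) (at x)" if "x \<in> {0<..<T}" for x
        using kd_at[of x] that by (simp add: has_real_derivative_iff_has_vector_derivative)
      show "(Q has_vector_derivative Q' x) (at x)" for x
        using Q_deriv[of x] by (simp add: has_real_derivative_iff_has_vector_derivative)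
      have "(\<lambda>s. \<kappa> s * Q' s) integrable_on {0..T}"
        by (rule integrable_continuous_interval) (intro continuous_intros continuous_on_subset[OF Q'_cont], auto)
      then show "((\<lambda>x. \<kappa> x * Q' x) has_integral \<kappa> T * Q T - \<kappa> 0 * Q 0 - y) {0..T}"
        unfolding y_def by (simp add: integrable_integral)
    qed
    then show ?thesis using Q0 unfolding T_def[symmetric] y_def by (simp add: integral_unique)
  qed
  have L1: "(\<lambda>n. integral {0..real n} (\<lambda>s. \<kappa> s * Q' s)) \<longlonglongrightarrow> integral {0..} (\<lambda>s. \<kappa> s * Q' s)"
  proof (rule lim_trunc[OF _ kbound_int[of "pi * Cb * Be"]])
    show "continuous_on {0..} (\<lambda>s. \<kappa> s * Q' s)" by (intro continuous_intros Q'_cont) auto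
    show "\<bar>\<kappa> s * Q' s\<bar> \<le> pi * Cb * Be * (\<kappa> s * (1 + s))" if "s \<ge> 0" for s
    proof -
      have "\<bar>\<kappa> s * Q' s\<bar> \<le> \<kappa> s * (pi * Cb * Be * (1 + s))"
        unfolding abs_mult using Q'_bound[of s] that k_nonneg[of s] by (intro mult_mono) auto
      then show ?thesis by (simp add: algebra_simps)
    qed
  qed
  have L2: "(\<lambda>n. integral {0..real n} (\<lambda>s. \<kappa>' s * Q s)) \<longlonglongrightarrow> integral {0..} (\<lambda>s. \<kappa>' s * Q s)"
  proof (rule lim_trunc[OF _ kdbound_int[of "pi * Cb * Be"]])
    show "continuous_on {0..} (\<lambda>s. \<kappa>' s * Q s)" by (intro continuous_intros Q_cont) auto
    show "\<bar>\<kappa>' s * Q s\<bar> \<le> pi * Cb * Be * (- \<kappa>' s * (1 + s))" if "s \<ge> 0" for s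
    proof -
      have "\<bar>\<kappa>' s * Q s\<bar> \<le> (- \<kappa>' s) * (pi * Cb * Be * (1 + s))"
        unfolding abs_mult using Q_bound[of s] that kd_nonpos[of s] by (intro mult_mono) auto
      then show ?thesis by (simp add: algebra_simps)
    qed
  qed
  have L3: "(\<lambda>n. \<kappa> (real n) * Q (real n)) \<longlonglongrightarrow> 0"
  proof (rule Lim_null_comparison[OF _ tendsto_mult_right_zero[OF k_lim, of "pi * Cb * Be"]])
    show "\<forall>\<^sub>F n in sequentially. norm (\<kappa> (real n) * Q (real n)) \<le> pi * Cb * Be * (\<kappa> (real n) * (1 + real n)^2)"
    proof (rule always_eventually, rule allI)
      fix n :: nat
      have k: "\<kappa> (real n) \<ge> 0" by (rule k_nonneg) simp
      have "\<bar>\<kappa> (real n) * Q (real n)\<bar> \<le> \<kappa> (real n) * (pi * Cb * Be * (1 + real n))"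
        unfolding abs_mult using Q_bound[of "real n"] k by (intro mult_mono) auto
      also have "\<dots> \<le> \<kappa> (real n) * (pi * Cb * Be * (1 + real n)^2)"
      proof (rule mult_left_mono[OF _ k])
        have "(1 + real n) * 1 \<le> (1 + real n) * (1 + real n)" by (intro mult_left_mono) auto
        then show "pi * Cb * Be * (1 + real n) \<le> pi * Cb * Be * (1 + real n)^2"
          using Cb0 Be0 by (intro mult_left_mono) (auto simp: power2_eq_square)
      qed
      finally show "norm (\<kappa> (real n) * Q (real n)) \<le> pi * Cb * Be * (\<kappa> (real n) * (1 + real n)^2)"
        by (simp add: algebra_simps)
    qed
  qed
  have "(\<lambda>n. \<kappa> (real n) * Q (real n) - integral {0..real n} (\<lambda>s. \<kappa> s * Q' s)) \<longlonglongrightarrow> 0 - integral {0..} (\<lambda>s. \<kappa> s * Q' s)"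
    by (intro tendsto_diff L3 L1)
  then have "(\<lambda>n. integral {0..real n} (\<lambda>s. \<kappa>' s * Q s)) \<longlonglongrightarrow> - integral {0..} (\<lambda>s. \<kappa> s * Q' s)"
    by (simp add: ibp)
  from LIMSEQ_unique[OF L2 this] show ?thesis by simp
qed

end


context setting begin

definition "Xp s = integral {0..pi} (\<lambda>x. dt phi x t * dx (slice eta s) x t)"
definition "G \<sigma> s = integral {0..pi} (\<lambda>x. dx (slice eta \<sigma>) x t * dx (slice eta s) x t)"
definition "Isig s = integral {0..} (\<lambda>\<sigma>. \<kappa> \<sigma> * G \<sigma> s)"
definition "W x = integral {0..} (\<lambda>\<sigma>. \<kappa> \<sigma> * dx (dx (slice eta \<sigma>)) x t)"

lemma phi_trick: assumes s: "s \<ge> 0"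
  shows "integral {0..pi} (\<lambda>x. dt (dx phi) x t * eta x t s) = - Xp s"
proof -
  define R1 where "R1 = (\<lambda>\<tau>. integral {0..pi} (\<lambda>x. dx phi x \<tau> * eta x t s))"
  define R2 where "R2 = (\<lambda>\<tau>. - integral {0..pi} (\<lambda>x. phi x \<tau> * dx (slice eta s) x t))"
  have eq: "R1 = R2"
  proof (rule ext)
    fix \<tau>
    show "R1 \<tau> = R2 \<tau>" unfolding R1_def R2_def
    proof (rule ibp0)
      show "((\<lambda>y. phi y \<tau>) has_real_derivative dx phi x \<tau>) (at x)" for x by (rule c2_dx[OF C2ph])
      show "((\<lambda>y. eta y t s) has_real_derivative dx (slice eta s) x t) (at x)" for x by (rule er_dx[OF er])
      show "continuous_on {0..pi} (\<lambda>x. dx phi x \<tau>)" by (intro continuous_intros)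
      show "continuous_on {0..pi} (\<lambda>x. dx (slice eta s) x t)" by (intro continuous_intros)
    qed (use bc0[OF s] bcpi[OF s] in auto)
  qed
  have d1: "(R1 has_real_derivative integral {0..pi} (\<lambda>x. dt (dx phi) x t * eta x t s)) (at t)"
  proof -
    have "((\<lambda>\<tau>. integral (cbox 0 pi) (\<lambda>x. dx phi x \<tau> * eta x t s)) has_field_derivative
        integral (cbox 0 pi) (\<lambda>x. dt (dx phi) x t * eta x t s)) (at t within UNIV)"
    proof (rule leibniz_rule_field_derivative[where fx = "\<lambda>\<tau> x. dt (dx phi) x \<tau> * eta x t s"])
      show "((\<lambda>\<tau>. dx phi x \<tau> * eta x t s) has_field_derivative dt (dx phi) x \<tau>' * eta x t s) (at \<tau>' within UNIV)" for \<tau>' x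
        using DERIV_cmult_right[OF c2_dtdx[OF C2ph]] by simp
      show "(\<lambda>x. dx phi x \<tau>' * eta x t s) integrable_on cbox 0 pi" for \<tau>'
        by (rule integrable_continuous) (intro continuous_intros)
      show "continuous_on (UNIV \<times> cbox 0 pi) (\<lambda>(\<tau>, x). dt (dx phi) x \<tau> * eta x t s)"
        unfolding split_beta by (intro continuous_intros)
    qed auto
    then show ?thesis by (simp add: R1_def cbox_interval)
  qed
  have d2: "(R2 has_real_derivative - Xp s) (at t)"
  proof -
    have "((\<lambda>\<tau>. integral (cbox 0 pi) (\<lambda>x. phi x \<tau> * dx (slice eta s) x t)) has_field_derivative
        integral (cbox 0 pi) (\<lambda>x. dt phi x t * dx (slice eta s) x t)) (at t within UNIV)"
    proof (rule leibniz_rule_field_derivative[where fx = "\<lambda>\<tau> x. dt phi x \<tau> * dx (slice eta s) x t"])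
      show "((\<lambda>\<tau>. phi x \<tau> * dx (slice eta s) x t) has_field_derivative dt phi x \<tau>' * dx (slice eta s) x t) (at \<tau>' within UNIV)" for \<tau>' x
        using DERIV_cmult_right[OF c2_dt[OF C2ph]] by simp
      show "(\<lambda>x. phi x \<tau>' * dx (slice eta s) x t) integrable_on cbox 0 pi" for \<tau>'
        by (rule integrable_continuous) (intro continuous_intros)
      show "continuous_on (UNIV \<times> cbox 0 pi) (\<lambda>(\<tau>, x). dt phi x \<tau> * dx (slice eta s) x t)"
        unfolding split_beta by (intro continuous_intros)
    qed auto
    then have "((\<lambda>\<tau>. integral {0..pi} (\<lambda>x. phi x \<tau> * dx (slice eta s) x t)) has_real_derivative Xp s) (at t)"
      by (simp add: Xp_def cbox_interval)
    from DERIV_minus[OF this] show ?thesis by (simp add: R2_def)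
  qed
  show ?thesis using DERIV_unique[OF d1 d2[folded eq]] .
qed

lemma W_eq: assumes s: "s \<ge> 0"
  shows "integral {0..pi} (\<lambda>x. W x * eta x t s) = - Isig s"
proof -
  have "integral {0..pi} (\<lambda>x. W x * eta x t s) =
      integral {0..pi} (\<lambda>x. integral {0..} (\<lambda>\<sigma>. \<kappa> \<sigma> * dx (dx (slice eta \<sigma>)) x t * eta x t s))"
    unfolding W_def by (rule integral_cong) (simp add: intmulr)
  also have "\<dots> = integral {0..} (\<lambda>\<sigma>. integral {0..pi} (\<lambda>x. \<kappa> \<sigma> * dx (dx (slice eta \<sigma>)) x t * eta x t s))"
  proof (rule swap_half[where g = "\<lambda>\<sigma>. (Be * (Be * (1 + s))) * (\<kappa> \<sigma> * (1 + \<sigma>))"])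
    show "continuous_on ({0..pi} \<times> {0..}) (\<lambda>(x, \<sigma>). \<kappa> \<sigma> * dx (dx (slice eta \<sigma>)) x t * eta x t s)"
      unfolding split_beta by (intro continuous_intros) auto
    show "(\<lambda>\<sigma>. Be * (Be * (1 + s)) * (\<kappa> \<sigma> * (1 + \<sigma>))) integrable_on {0..}" by (rule kbound_int)
    show "\<bar>\<kappa> \<sigma> * dx (dx (slice eta \<sigma>)) x t * eta x t s\<bar> \<le> Be * (Be * (1 + s)) * (\<kappa> \<sigma> * (1 + \<sigma>))"
      if "x \<in> {0..pi}" "\<sigma> \<ge> 0" for x \<sigma>
    proof -
      have "\<bar>\<kappa> \<sigma> * dx (dx (slice eta \<sigma>)) x t * eta x t s\<bar> \<le> \<kappa> \<sigma> * (Be * (1 + \<sigma>)) * (Be * (1 + s))"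
        unfolding abs_mult using k_nonneg[OF that(2)] Be_xx[OF that(1) tt that(2)] Be_eta[OF that(1) tt s] Be0 that
        by (intro mult_mono) auto
      then show ?thesis by (simp add: algebra_simps)
    qed
  qed simp
  also have "\<dots> = integral {0..} (\<lambda>\<sigma>. - (\<kappa> \<sigma> * G \<sigma> s))"
  proof (rule integral_cong)
    fix \<sigma> :: real assume "\<sigma> \<in> {0..}"
    have "integral {0..pi} (\<lambda>x. \<kappa> \<sigma> * dx (dx (slice eta \<sigma>)) x t * eta x t s) =
        \<kappa> \<sigma> * integral {0..pi} (\<lambda>x. dx (dx (slice eta \<sigma>)) x t * eta x t s)"
      by (simp add: mult.assoc intmul)
    also have "integral {0..pi} (\<lambda>x. dx (dx (slice eta \<sigma>)) x t * eta x t s) = - G \<sigma> s"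
      unfolding G_def
    proof (rule ibp0)
      show "((\<lambda>y. dx (slice eta \<sigma>) y t) has_real_derivative dx (dx (slice eta \<sigma>)) x t) (at x)" for x by (rule er_dxdx[OF er])
      show "((\<lambda>y. eta y t s) has_real_derivative dx (slice eta s) x t) (at x)" for x by (rule er_dx[OF er])
      show "continuous_on {0..pi} (\<lambda>x. dx (dx (slice eta \<sigma>)) x t)" by (intro continuous_intros)
      show "continuous_on {0..pi} (\<lambda>x. dx (slice eta s) x t)" by (intro continuous_intros)
    qed (use bc0[OF s] bcpi[OF s] in auto)
    finally show "integral {0..pi} (\<lambda>x. \<kappa> \<sigma> * dx (dx (slice eta \<sigma>)) x t * eta x t s) = - (\<kappa> \<sigma> * G \<sigma> s)" by simp
  qed
  also have "\<dots> = - Isig s" by (simp add: Isig_def)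
  finally show ?thesis .
qed

lemma cA: assumes s: "s \<ge> 0" shows "c * A s = beta * Xp s - Isig s"
proof -
  have "integral {0..pi} (\<lambda>x. W x * eta x t s) =
        integral {0..pi} (\<lambda>x. c * (dt theta x t * eta x t s) + beta * (dt (dx phi) x t * eta x t s))"
  proof (rule integral_spike[OF neg0pi])
    fix x assume "x \<in> {0..pi} - {0, pi}"
    then have x: "x \<in> {0<..<pi}" by auto
    have "W x = c * dt theta x t + beta * dt (dx phi) x t"
      using pde_heat[OF x] unfolding W_def by simp
    then show "c * (dt theta x t * eta x t s) + beta * (dt (dx phi) x t * eta x t s) = W x * eta x t s"
      by (simp add: algebra_simps)
  qed
  also have "\<dots> = c * A s + beta * integral {0..pi} (\<lambda>x. dt (dx phi) x t * eta x t s)"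
    unfolding A_def
    by (subst integral_add) (auto intro!: integrable_continuous_interval continuous_intros simp: intmul)
  finally have "- Isig s = c * A s + beta * (- Xp s)"
    using W_eq[OF s] phi_trick[OF s] by simp
  then show ?thesis by simp
qed

end


context setting begin

definition "nPh = integral {0..pi} (\<lambda>x. (dt phi x t)^2)"
definition "nx s = integral {0..pi} (\<lambda>x. (dx (slice eta s) x t)^2)"
definition "V = integral {0..} (\<lambda>s. \<kappa> s * nx s)"
definition "N = integral {0..} (\<lambda>s. - \<kappa>' s * nx s)"
definition "X1 = integral {0..} (\<lambda>s. \<kappa> s * Xp s)"
definition "X2 = integral {0..} (\<lambda>s. \<kappa> s * Isig s)"
definition "X3 = integral {0..} (\<lambda>s. \<kappa>' s * Q s)"
definition "gg = integral {0..} \<kappa>"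

lemma gg_pos: "gg > 0" unfolding gg_def by (rule g0_pos)

lemma kint:
  assumes "continuous_on {0..} f" "\<And>s. s \<ge> 0 \<Longrightarrow> \<bar>f s\<bar> \<le> C * (1 + s)"
  shows "(\<lambda>s. \<kappa> s * f s) integrable_on {0..}"
proof (rule cbi[OF _ _ kbound_int[of C]])
  show "continuous_on {0..} (\<lambda>s. \<kappa> s * f s)" by (intro continuous_intros assms(1)) auto
  show "\<bar>\<kappa> s * f s\<bar> \<le> C * (\<kappa> s * (1 + s))" if "s \<in> {0..}" for s
  proof -
    have k: "\<kappa> s \<ge> 0" using k_nonneg[of s] that by auto
    have "\<bar>\<kappa> s * f s\<bar> = \<kappa> s * \<bar>f s\<bar>" using k by (simp add: abs_mult)
    also have "\<dots> \<le> \<kappa> s * (C * (1 + s))" using assms(2)[of s] that k by (intro mult_left_mono) auto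
    finally have "\<bar>\<kappa> s * f s\<bar> \<le> \<kappa> s * (C * (1 + s))" .
    then show ?thesis by (simp add: algebra_simps)
  qed
qed auto

lemma kint2:
  assumes "continuous_on {0..} f" "\<And>s. s \<ge> 0 \<Longrightarrow> \<bar>f s\<bar> \<le> C * (1 + s)^2"
  shows "(\<lambda>s. \<kappa> s * f s) integrable_on {0..}"
proof (rule cbi[OF _ _ imul[OF k_int2, of C]])
  show "continuous_on {0..} (\<lambda>s. \<kappa> s * f s)" by (intro continuous_intros assms(1)) auto
  show "\<bar>\<kappa> s * f s\<bar> \<le> C * (\<kappa> s * (1 + s)^2)" if "s \<in> {0..}" for s
  proof -
    have k: "\<kappa> s \<ge> 0" using k_nonneg[of s] that by auto
    have "\<bar>\<kappa> s * f s\<bar> = \<kappa> s * \<bar>f s\<bar>" using k by (simp add: abs_mult)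
    also have "\<dots> \<le> \<kappa> s * (C * (1 + s)^2)" using assms(2)[of s] that k by (intro mult_left_mono) auto
    finally have "\<bar>\<kappa> s * f s\<bar> \<le> \<kappa> s * (C * (1 + s)^2)" .
    then show ?thesis by (simp add: algebra_simps)
  qed
qed auto

lemma kdint2:
  assumes "continuous_on {0..} f" "\<And>s. s \<ge> 0 \<Longrightarrow> \<bar>f s\<bar> \<le> C * (1 + s)^2"
  shows "(\<lambda>s. - \<kappa>' s * f s) integrable_on {0..}"
proof (rule cbi[OF _ _ imul[OF kd_int2, of C]])
  show "continuous_on {0..} (\<lambda>s. - \<kappa>' s * f s)" by (intro continuous_intros assms(1)) auto
  show "\<bar>- \<kappa>' s * f s\<bar> \<le> C * (- \<kappa>' s * (1 + s)^2)" if "s \<in> {0..}" for s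
  proof -
    have k: "- \<kappa>' s \<ge> 0" using kd_nonpos[of s] that by auto
    have "\<bar>- \<kappa>' s * f s\<bar> = (- \<kappa>' s) * \<bar>f s\<bar>" using k by (simp add: abs_mult)
    also have "\<dots> \<le> (- \<kappa>' s) * (C * (1 + s)^2)" using assms(2)[of s] that k by (intro mult_left_mono) auto
    finally have "\<bar>- \<kappa>' s * f s\<bar> \<le> (- \<kappa>' s) * (C * (1 + s)^2)" .
    then show ?thesis by (simp add: algebra_simps)
  qed
qed auto

lemma Xp_cont: "continuous_on {0..} Xp"
proof -
  have "continuous_on ({0..} \<times> cbox 0 pi) (\<lambda>(s, x). dt phi x t * dx (slice eta s) x t)"
    unfolding split_beta by (intro continuous_intros)
  from integral_continuous_on_param[OF this] show ?thesis by (simp add: Xp_def[abs_def] cbox_interval)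
qed

lemma nx_cont: "continuous_on {0..} nx"
proof -
  have "continuous_on ({0..} \<times> cbox 0 pi) (\<lambda>(s, x). (dx (slice eta s) x t)^2)"
    unfolding split_beta by (intro continuous_intros)
  from integral_continuous_on_param[OF this] show ?thesis by (simp add: nx_def[abs_def] cbox_interval)
qed

lemma G_cont: "continuous_on {0..} (\<lambda>\<sigma>. G \<sigma> s)"
proof -
  have "continuous_on ({0..} \<times> cbox 0 pi) (\<lambda>(\<sigma>, x). dx (slice eta \<sigma>) x t * dx (slice eta s) x t)"
    unfolding split_beta by (intro continuous_intros)
  from integral_continuous_on_param[OF this] show ?thesis by (simp add: G_def cbox_interval)
qed

lemma Xp_bound: "s \<ge> 0 \<Longrightarrow> \<bar>Xp s\<bar> \<le> (pi * Cb * Be) * (1 + s)"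
proof -
  assume s: "s \<ge> 0"
  have "\<bar>Xp s\<bar> \<le> (pi - 0) * (Cb * (Be * (1 + s)))"
    unfolding Xp_def
  proof (rule ibound)
    show "continuous_on {0..pi} (\<lambda>x. dt phi x t * dx (slice eta s) x t)" by (intro continuous_intros)
    show "\<bar>dt phi x t * dx (slice eta s) x t\<bar> \<le> Cb * (Be * (1 + s))" if "x \<in> {0..pi}" for x
      unfolding abs_mult using Cb_dtph[OF that tt] Be_x[OF that tt s] Cb0 by (intro mult_mono) auto
  qed simp
  then show ?thesis by (simp add: algebra_simps)
qed

lemma nx_bound: "s \<ge> 0 \<Longrightarrow> \<bar>nx s\<bar> \<le> (pi * Be * Be) * (1 + s)^2"
proof -
  assume s: "s \<ge> 0"
  have "\<bar>nx s\<bar> \<le> (pi - 0) * ((Be * (1 + s)) * (Be * (1 + s)))"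
    unfolding nx_def
  proof (rule ibound)
    show "continuous_on {0..pi} (\<lambda>x. (dx (slice eta s) x t)^2)" by (intro continuous_intros)
    show "\<bar>(dx (slice eta s) x t)^2\<bar> \<le> Be * (1 + s) * (Be * (1 + s))" if "x \<in> {0..pi}" for x
      unfolding power2_eq_square abs_mult using Be_x[OF that tt s] by (intro mult_mono) auto
  qed simp
  then show ?thesis by (simp add: power2_eq_square algebra_simps)
qed

lemma G_bound: "\<sigma> \<ge> 0 \<Longrightarrow> s \<ge> 0 \<Longrightarrow> \<bar>G \<sigma> s\<bar> \<le> (pi * Be * (Be * (1 + s))) * (1 + \<sigma>)"
proof -
  assume \<sigma>: "\<sigma> \<ge> 0" and s: "s \<ge> 0"
  have "\<bar>G \<sigma> s\<bar> \<le> (pi - 0) * ((Be * (1 + \<sigma>)) * (Be * (1 + s)))"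
    unfolding G_def
  proof (rule ibound)
    show "continuous_on {0..pi} (\<lambda>x. dx (slice eta \<sigma>) x t * dx (slice eta s) x t)" by (intro continuous_intros)
    show "\<bar>dx (slice eta \<sigma>) x t * dx (slice eta s) x t\<bar> \<le> Be * (1 + \<sigma>) * (Be * (1 + s))" if "x \<in> {0..pi}" for x
      unfolding abs_mult using Be_x[OF that tt \<sigma>] Be_x[OF that tt s] Be0 \<sigma> by (intro mult_mono) auto
  qed simp
  then show ?thesis by (simp add: algebra_simps)
qed

lemma nx_nonneg: "nx s \<ge> 0"
  unfolding nx_def by (rule integral_nonneg) (auto intro!: integrable_continuous_interval continuous_intros)

lemma kA_int: "(\<lambda>s. \<kappa> s * A s) integrable_on {0..}"
  by (rule kint[OF A_cont, of "pi * Cb * Be"]) (use A_bound in auto)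
lemma kBt_int: "(\<lambda>s. \<kappa> s * Bt s) integrable_on {0..}"
  by (rule kint[OF Bt_cont, of "pi * Cb * Be"]) (use Bt_bound in auto)
lemma kXp_int: "(\<lambda>s. \<kappa> s * Xp s) integrable_on {0..}"
  by (rule kint[OF Xp_cont Xp_bound])
lemma knx_int: "(\<lambda>s. \<kappa> s * nx s) integrable_on {0..}"
  by (rule kint2[OF nx_cont nx_bound])
lemma kdnx_int: "(\<lambda>s. - \<kappa>' s * nx s) integrable_on {0..}"
  by (rule kdint2[OF nx_cont nx_bound])
lemma kG_int: "s \<ge> 0 \<Longrightarrow> (\<lambda>\<sigma>. \<kappa> \<sigma> * G \<sigma> s) integrable_on {0..}"
  by (rule kint[OF G_cont G_bound])

lemma kIsig_eq: assumes "s \<in> {0..}" shows "beta * (\<kappa> s * Xp s) - c * (\<kappa> s * A s) = \<kappa> s * Isig s"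
proof -
  have e: "c * A s = beta * Xp s - Isig s" by (rule cA) (use assms in auto)
  have "beta * (\<kappa> s * Xp s) - c * (\<kappa> s * A s) = \<kappa> s * (beta * Xp s - c * A s)" by (simp add: algebra_simps)
  also have "\<dots> = \<kappa> s * Isig s" using e by simp
  finally show ?thesis .
qed

lemma kIsig_int: "(\<lambda>s. \<kappa> s * Isig s) integrable_on {0..}"
  by (rule integrable_eq[OF _ kIsig_eq]) (intro integrable_diff imul kXp_int kA_int)

lemma intP': "integral {0..} (\<lambda>s. \<kappa> s * P' t s) = integral {0..} (\<lambda>s. \<kappa> s * A s) + gg * nTh + X3"
proof -
  have "integral {0..} (\<lambda>s. \<kappa> s * P' t s) = integral {0..} (\<lambda>s. \<kappa> s * A s + \<kappa> s * Bt s)"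
    by (rule integral_cong) (simp add: P'_split algebra_simps)
  also have "\<dots> = integral {0..} (\<lambda>s. \<kappa> s * A s) + integral {0..} (\<lambda>s. \<kappa> s * Bt s)"
    by (rule integral_add[OF kA_int kBt_int])
  also have "integral {0..} (\<lambda>s. \<kappa> s * Bt s) = integral {0..} (\<lambda>s. \<kappa> s * nTh - \<kappa> s * Q' s)"
  proof (rule integral_spike[of "{0}"])
    show "\<kappa> s * nTh - \<kappa> s * Q' s = \<kappa> s * Bt s" if "s \<in> {0..} - {0}" for s
    proof -
      have "Bt s = nTh - Q' s" by (rule Bt_eq) (use that in auto)
      then show ?thesis by (simp add: right_diff_distrib)
    qed
  qed simp
  also have "\<dots> = gg * nTh - integral {0..} (\<lambda>s. \<kappa> s * Q' s)"
    by (subst integral_diff[OF imulr[OF k_int0] kQ'_int]) (simp add: intmulr gg_def)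
  also have "\<dots> = gg * nTh + X3" by (simp add: kQ X3_def)
  finally show ?thesis by simp
qed

lemma cintA: "c * integral {0..} (\<lambda>s. \<kappa> s * A s) = beta * X1 - X2"
proof -
  have "c * integral {0..} (\<lambda>s. \<kappa> s * A s) = integral {0..} (\<lambda>s. beta * (\<kappa> s * Xp s) - \<kappa> s * Isig s)"
    unfolding intmul[symmetric] by (rule integral_cong) (use kIsig_eq in \<open>simp add: algebra_simps\<close>)
  also have "\<dots> = beta * X1 - X2"
    by (subst integral_diff[OF imul[OF kXp_int] kIsig_int]) (simp add: intmul X1_def X2_def)
  finally show ?thesis .
qed

lemma D_eq: "- (2 * c / g0 \<kappa>) * integral {0..} (\<lambda>s. \<kappa> s * P' t s) =
    - 2 * c * nTh - (2 / gg) * (beta * X1 - X2) - (2 * c / gg) * X3"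
proof -
  have g: "g0 \<kappa> = gg" by (simp add: g0_def gg_def)
  have "- (2 * c / gg) * integral {0..} (\<lambda>s. \<kappa> s * A s) = - (2 / gg) * (c * integral {0..} (\<lambda>s. \<kappa> s * A s))"
    by simp
  then show ?thesis unfolding g intP' cintA using gg_pos by (simp add: algebra_simps)
qed

end


lemma int_lin2:
  fixes f g :: "'a::euclidean_space \<Rightarrow> real"
  assumes "f integrable_on S" "g integrable_on S"
  shows "integral S (\<lambda>x. a * f x + b * g x) = a * integral S f + b * integral S g"
  using integral_add[OF imul[OF assms(1), of a] imul[OF assms(2), of b]] by (simp add: intmul)

lemma amgm1:
  fixes e g b p q :: real
  assumes e: "e > 0" and g: "g > 0"
  shows "- (2 * b / g) * (p * q) \<le> (e / g) * p^2 + (b^2 / (g * e)) * q^2"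
proof -
  have "0 \<le> (e * p + b * q)^2 / (g * e)" using e g by simp
  also have "(e * p + b * q)^2 / (g * e) = (e / g) * p^2 + (2 * b / g) * (p * q) + (b^2 / (g * e)) * q^2"
    using e g by (simp add: field_simps power2_eq_square)
  finally show ?thesis by simp
qed

lemma amgm2:
  fixes p q :: real
  shows "p * q \<le> (1/2) * p^2 + (1/2) * q^2"
proof -
  have "0 \<le> (p - q)^2" by simp
  then show ?thesis by (simp add: power2_eq_square algebra_simps)
qed

lemma amgm3:
  fixes a b \<gamma> :: real
  assumes "\<gamma> > 0"
  shows "\<bar>a * b\<bar> \<le> \<gamma> * a^2 + (1 / (4 * \<gamma>)) * b^2"
proof -
  have "0 \<le> (2 * \<gamma> * \<bar>a\<bar> - \<bar>b\<bar>)^2" by simp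
  then have "4 * \<gamma> * \<bar>a * b\<bar> \<le> 4 * \<gamma> * \<gamma> * a^2 + b^2"
    by (simp add: power2_eq_square algebra_simps abs_mult)
  then have "4 * \<gamma> * \<bar>a * b\<bar> \<le> 4 * \<gamma> * (\<gamma> * a^2 + (1 / (4 * \<gamma>)) * b^2)"
    using assms by (simp add: algebra_simps)
  then show ?thesis using assms by simp
qed

context setting begin

lemma nPh_nonneg: "nPh \<ge> 0"
  unfolding nPh_def by (rule integral_nonneg) (auto intro!: integrable_continuous_interval continuous_intros)
lemma nTh_nonneg: "nTh \<ge> 0"
  unfolding nTh_def by (rule integral_nonneg) (auto intro!: integrable_continuous_interval continuous_intros)
lemma V_nonneg: "V \<ge> 0"
  unfolding V_def by (rule integral_nonneg[OF knx_int]) (auto intro!: mult_nonneg_nonneg k_nonneg nx_nonneg)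
lemma N_nonneg: "N \<ge> 0"
  unfolding N_def
proof (rule integral_nonneg[OF kdnx_int])
  fix s :: real assume "s \<in> {0..}"
  then have "- \<kappa>' s \<ge> 0" using kd_nonpos[of s] by simp
  then show "0 \<le> - \<kappa>' s * nx s" using nx_nonneg[of s] by (rule mult_nonneg_nonneg)
qed

lemma I4: "\<delta> * V \<le> N"
proof -
  have "\<delta> * V = integral {0..} (\<lambda>s. \<delta> * (\<kappa> s * nx s))" by (simp add: V_def intmul)
  also have "\<dots> \<le> N" unfolding N_def
  proof (rule integral_le[OF imul[OF knx_int] kdnx_int])
    fix s :: real assume "s \<in> {0..}"
    then have "\<delta> * \<kappa> s \<le> - \<kappa>' s" using kdec[of s] by auto
    then have "(\<delta> * \<kappa> s) * nx s \<le> (- \<kappa>' s) * nx s" by (rule mult_right_mono) (rule nx_nonneg)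
    then show "\<delta> * (\<kappa> s * nx s) \<le> - \<kappa>' s * nx s" by (simp add: mult.assoc)
  qed
  finally show ?thesis .
qed

lemma I1: assumes e: "\<epsilon> > 0"
  shows "- (2 * beta / gg) * X1 \<le> \<epsilon> * nPh + (beta^2 / (gg * \<epsilon>)) * V"
proof -
  have pt: "- (2 * beta / gg) * Xp s \<le> (\<epsilon> / gg) * nPh + (beta^2 / (gg * \<epsilon>)) * nx s" for s
  proof -
    have "- (2 * beta / gg) * Xp s = integral {0..pi} (\<lambda>x. - (2 * beta / gg) * (dt phi x t * dx (slice eta s) x t))"
      by (simp add: Xp_def intmul)
    also have "\<dots> \<le> integral {0..pi} (\<lambda>x. (\<epsilon> / gg) * (dt phi x t)^2 + (beta^2 / (gg * \<epsilon>)) * (dx (slice eta s) x t)^2)"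
    proof (rule integral_le)
      show "(\<lambda>x. - (2 * beta / gg) * (dt phi x t * dx (slice eta s) x t)) integrable_on {0..pi}"
        by (rule integrable_continuous_interval) (intro continuous_intros)
      show "(\<lambda>x. (\<epsilon> / gg) * (dt phi x t)^2 + (beta^2 / (gg * \<epsilon>)) * (dx (slice eta s) x t)^2) integrable_on {0..pi}"
        by (rule integrable_continuous_interval) (intro continuous_intros)
      show "- (2 * beta / gg) * (dt phi x t * dx (slice eta s) x t) \<le> (\<epsilon> / gg) * (dt phi x t)^2 + (beta^2 / (gg * \<epsilon>)) * (dx (slice eta s) x t)^2" for x
        by (rule amgm1[OF e gg_pos])
    qed
    also have "\<dots> = (\<epsilon> / gg) * nPh + (beta^2 / (gg * \<epsilon>)) * nx s"
      unfolding nPh_def nx_def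
      by (rule int_lin2) (auto intro!: integrable_continuous_interval continuous_intros)
    finally show ?thesis .
  qed
  have "- (2 * beta / gg) * X1 = integral {0..} (\<lambda>s. - (2 * beta / gg) * (\<kappa> s * Xp s))"
    by (simp only: X1_def intmul)
  also have "\<dots> \<le> integral {0..} (\<lambda>s. ((\<epsilon> / gg) * nPh) * \<kappa> s + (beta^2 / (gg * \<epsilon>)) * (\<kappa> s * nx s))"
  proof (rule integral_le)
    show "(\<lambda>s. - (2 * beta / gg) * (\<kappa> s * Xp s)) integrable_on {0..}"
      by (rule imul[OF kXp_int])
    show "(\<lambda>s. ((\<epsilon> / gg) * nPh) * \<kappa> s + (beta^2 / (gg * \<epsilon>)) * (\<kappa> s * nx s)) integrable_on {0..}"
      by (intro integrable_add imul k_int0 knx_int)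
    fix s :: real assume "s \<in> {0..}"
    then have "\<kappa> s * (- (2 * beta / gg) * Xp s) \<le> \<kappa> s * ((\<epsilon> / gg) * nPh + (beta^2 / (gg * \<epsilon>)) * nx s)"
      using pt[of s] k_nonneg[of s] by (intro mult_left_mono) auto
    then show "- (2 * beta / gg) * (\<kappa> s * Xp s) \<le> ((\<epsilon> / gg) * nPh) * \<kappa> s + (beta^2 / (gg * \<epsilon>)) * (\<kappa> s * nx s)"
      by (simp add: algebra_simps)
  qed
  also have "\<dots> = ((\<epsilon> / gg) * nPh) * gg + (beta^2 / (gg * \<epsilon>)) * V"
    unfolding V_def gg_def by (rule int_lin2[OF k_int0 knx_int])
  also have "\<dots> = \<epsilon> * nPh + (beta^2 / (gg * \<epsilon>)) * V" using gg_pos by simp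
  finally show ?thesis .
qed

lemma I2: "X2 \<le> gg * V"
proof -
  have pt: "Isig s \<le> (1/2) * V + (nx s / 2) * gg" if s: "s \<ge> 0" for s
  proof -
    have Gb: "G \<sigma> s \<le> (1/2) * nx \<sigma> + (1/2) * nx s" for \<sigma>
    proof -
      have "G \<sigma> s \<le> integral {0..pi} (\<lambda>x. (1/2) * (dx (slice eta \<sigma>) x t)^2 + (1/2) * (dx (slice eta s) x t)^2)"
        unfolding G_def
      proof (rule integral_le)
        show "(\<lambda>x. dx (slice eta \<sigma>) x t * dx (slice eta s) x t) integrable_on {0..pi}"
          by (rule integrable_continuous_interval) (intro continuous_intros)
        show "(\<lambda>x. (1/2) * (dx (slice eta \<sigma>) x t)^2 + (1/2) * (dx (slice eta s) x t)^2) integrable_on {0..pi}"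
          by (rule integrable_continuous_interval) (intro continuous_intros)
        show "dx (slice eta \<sigma>) x t * dx (slice eta s) x t \<le> (1/2) * (dx (slice eta \<sigma>) x t)^2 + (1/2) * (dx (slice eta s) x t)^2" for x
          by (rule amgm2)
      qed
      also have "\<dots> = (1/2) * nx \<sigma> + (1/2) * nx s"
        unfolding nx_def by (rule int_lin2) (auto intro!: integrable_continuous_interval continuous_intros)
      finally show ?thesis .
    qed
    have "Isig s \<le> integral {0..} (\<lambda>\<sigma>. (1/2) * (\<kappa> \<sigma> * nx \<sigma>) + (nx s / 2) * \<kappa> \<sigma>)"
      unfolding Isig_def
    proof (rule integral_le[OF kG_int[OF s]])
      show "(\<lambda>\<sigma>. (1/2) * (\<kappa> \<sigma> * nx \<sigma>) + (nx s / 2) * \<kappa> \<sigma>) integrable_on {0..}"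
        by (intro integrable_add imul k_int0 knx_int)
      fix \<sigma> :: real assume "\<sigma> \<in> {0..}"
      then have "\<kappa> \<sigma> * G \<sigma> s \<le> \<kappa> \<sigma> * ((1/2) * nx \<sigma> + (1/2) * nx s)"
        using Gb[of \<sigma>] k_nonneg[of \<sigma>] by (intro mult_left_mono) auto
      then show "\<kappa> \<sigma> * G \<sigma> s \<le> (1/2) * (\<kappa> \<sigma> * nx \<sigma>) + (nx s / 2) * \<kappa> \<sigma>" by (simp add: algebra_simps)
    qed
    also have "\<dots> = (1/2) * V + (nx s / 2) * gg"
      unfolding V_def gg_def by (rule int_lin2[OF knx_int k_int0])
    finally show ?thesis .
  qed
  have "X2 \<le> integral {0..} (\<lambda>s. ((1/2) * V) * \<kappa> s + (gg / 2) * (\<kappa> s * nx s))"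
    unfolding X2_def
  proof (rule integral_le[OF kIsig_int])
    show "(\<lambda>s. ((1/2) * V) * \<kappa> s + (gg / 2) * (\<kappa> s * nx s)) integrable_on {0..}"
      by (intro integrable_add imul k_int0 knx_int)
    fix s :: real assume "s \<in> {0..}"
    then have "\<kappa> s * Isig s \<le> \<kappa> s * ((1/2) * V + (nx s / 2) * gg)"
      using pt[of s] k_nonneg[of s] by (intro mult_left_mono) auto
    then show "\<kappa> s * Isig s \<le> ((1/2) * V) * \<kappa> s + (gg / 2) * (\<kappa> s * nx s)" by (simp add: algebra_simps)
  qed
  also have "\<dots> = ((1/2) * V) * gg + (gg / 2) * V"
    unfolding V_def gg_def by (rule int_lin2[OF k_int0 knx_int])
  also have "\<dots> = gg * V" by (simp add: algebra_simps)
  finally show ?thesis .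
qed

definition "Kc = integral {0..} (\<lambda>s. - \<kappa>' s)"

lemma Kc_nonneg: "Kc \<ge> 0"
  unfolding Kc_def
proof (rule integral_nonneg[OF kd_int0])
  fix s :: real assume "s \<in> {0..}"
  then show "0 \<le> - \<kappa>' s" using kd_nonpos[of s] by simp
qed

lemma Q_abs: assumes s: "s \<ge> 0" and g: "\<gamma> > 0"
  shows "\<bar>Q s\<bar> \<le> \<gamma> * nTh + (pi^2 / (4 * \<gamma>)) * nx s"
proof -
  have "\<bar>Q s\<bar> \<le> integral {0..pi} (\<lambda>x. \<gamma> * (theta x t)^2 + (1 / (4 * \<gamma>)) * (eta x t s)^2)"
    unfolding Q_def
  proof (rule iabs)
    show "(\<lambda>x. theta x t * eta x t s) integrable_on {0..pi}"
      by (rule integrable_continuous_interval) (intro continuous_intros)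
    show "(\<lambda>x. \<gamma> * (theta x t)^2 + (1 / (4 * \<gamma>)) * (eta x t s)^2) integrable_on {0..pi}"
      by (rule integrable_continuous_interval) (intro continuous_intros)
    show "\<bar>theta x t * eta x t s\<bar> \<le> \<gamma> * (theta x t)^2 + (1 / (4 * \<gamma>)) * (eta x t s)^2" for x
      by (rule amgm3[OF g])
  qed
  also have "\<dots> = \<gamma> * nTh + (1 / (4 * \<gamma>)) * integral {0..pi} (\<lambda>x. (eta x t s)^2)"
    unfolding nTh_def by (rule int_lin2) (auto intro!: integrable_continuous_interval continuous_intros)
  finally have q1: "\<bar>Q s\<bar> \<le> \<gamma> * nTh + (1 / (4 * \<gamma>)) * integral {0..pi} (\<lambda>x. (eta x t s)^2)" .
  have pq: "integral {0..pi} (\<lambda>x. (eta x t s)^2) \<le> pi^2 * nx s"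
    unfolding nx_def
  proof (rule poinc)
    show "((\<lambda>y. eta y t s) has_real_derivative dx (slice eta s) x t) (at x)" for x by (rule er_dx[OF er])
    show "continuous_on {0..pi} (\<lambda>x. dx (slice eta s) x t)" by (intro continuous_intros)
    show "eta 0 t s = 0" by (rule bc0[OF s])
  qed
  have "(1 / (4 * \<gamma>)) * integral {0..pi} (\<lambda>x. (eta x t s)^2) \<le> (1 / (4 * \<gamma>)) * (pi^2 * nx s)"
    using g by (intro mult_left_mono[OF pq]) auto
  with q1 have "\<bar>Q s\<bar> \<le> \<gamma> * nTh + (1 / (4 * \<gamma>)) * (pi^2 * nx s)" by linarith
  then show ?thesis by simp
qed

lemma I3: "- (2 * c / gg) * X3 \<le> c * nTh + (c * pi^2 * (Kc + 1) / gg^2) * N"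
proof -
  define \<gamma> where "\<gamma> = gg / (2 * (Kc + 1))"
  have g: "\<gamma> > 0" unfolding \<gamma>_def using gg_pos Kc_nonneg by simp
  define a where "a = (2 * c / gg) * (\<gamma> * nTh)"
  define b' where "b' = (2 * c / gg) * (pi^2 / (4 * \<gamma>))"
  have "- (2 * c / gg) * X3 = integral {0..} (\<lambda>s. - (2 * c / gg) * (\<kappa>' s * Q s))"
    by (simp add: X3_def intmul)
  also have "\<dots> \<le> integral {0..} (\<lambda>s. a * (- \<kappa>' s) + b' * (- \<kappa>' s * nx s))"
  proof (rule integral_le)
    show "(\<lambda>s. - (2 * c / gg) * (\<kappa>' s * Q s)) integrable_on {0..}" by (rule imul[OF kdQ_int])
    show "(\<lambda>s. a * (- \<kappa>' s) + b' * (- \<kappa>' s * nx s)) integrable_on {0..}"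
      by (intro integrable_add imul kd_int0 kdnx_int)
    fix s :: real assume "s \<in> {0..}"
    then have s: "s \<ge> 0" by simp
    have k: "- \<kappa>' s \<ge> 0" using kd_nonpos[OF s] by simp
    have cg: "2 * c / gg \<ge> 0" using cpos gg_pos by simp
    have "- (2 * c / gg) * (\<kappa>' s * Q s) \<le> (2 * c / gg) * ((- \<kappa>' s) * \<bar>Q s\<bar>)"
    proof -
      have "(- \<kappa>' s) * Q s \<le> (- \<kappa>' s) * \<bar>Q s\<bar>" by (rule mult_left_mono[OF abs_ge_self k])
      from mult_left_mono[OF this cg] show ?thesis by simp
    qed
    also have "\<dots> \<le> (2 * c / gg) * ((- \<kappa>' s) * (\<gamma> * nTh + (pi^2 / (4 * \<gamma>)) * nx s))"
      using Q_abs[OF s g] k cg by (intro mult_left_mono) auto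
    also have "\<dots> = a * (- \<kappa>' s) + b' * (- \<kappa>' s * nx s)"
      by (simp add: a_def b'_def algebra_simps)
    finally show "- (2 * c / gg) * (\<kappa>' s * Q s) \<le> a * (- \<kappa>' s) + b' * (- \<kappa>' s * nx s)" .
  qed
  also have "\<dots> = a * Kc + b' * N"
    unfolding Kc_def N_def by (rule int_lin2[OF kd_int0 kdnx_int])
  finally have i: "- (2 * c / gg) * X3 \<le> a * Kc + b' * N" .
  have aK: "a * Kc \<le> c * nTh"
  proof -
    have "a * Kc = c * nTh * (Kc / (Kc + 1))"
      unfolding a_def \<gamma>_def using gg_pos Kc_nonneg by (simp add: field_simps)
    also have "\<dots> \<le> c * nTh * 1"
      using cpos nTh_nonneg Kc_nonneg by (intro mult_left_mono) auto
    finally show ?thesis by simp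
  qed
  have bd: "b' = c * pi^2 * (Kc + 1) / gg^2"
    unfolding b'_def \<gamma>_def using gg_pos Kc_nonneg by (simp add: field_simps power2_eq_square)
  from i aK have "- (2 * c / gg) * X3 \<le> c * nTh + b' * N" by linarith
  then show ?thesis by (simp only: bd)
qed

end


context setting begin

lemma L2sq: "continuous_on {0..pi} f \<Longrightarrow> (L2norm f)^2 = integral {0..pi} (\<lambda>x. (f x)^2)"
  unfolding L2norm_def
  by (rule real_sqrt_pow2, rule integral_nonneg) (auto intro!: integrable_continuous_interval continuous_intros)

lemma main:
  assumes e: "\<epsilon> > 0"
  shows "\<exists>D. (F1 c \<kappa> theta eta has_real_derivative D) (at t) \<and>
              D \<le> - c * (L2norm (\<lambda>x. theta x t))^2 - Vnorm2 \<kappa> eta t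
                   + \<epsilon> * (L2norm (\<lambda>x. dt phi x t))^2
                   - (beta^2 / (g0 \<kappa> * \<delta>) + 3 / \<delta> + c * pi^2 * (integral {0..} (\<lambda>s. - \<kappa>' s) + 1) / (g0 \<kappa>)^2) * (1 + 1 / \<epsilon>) *
                     integral {0..} (\<lambda>s. \<kappa>' s * (L2norm (\<lambda>x. dx (slice eta s) x t))^2)"
proof (intro exI conjI)
  show "(F1 c \<kappa> theta eta has_real_derivative (- (2 * c / g0 \<kappa>)) * integral {0..} (\<lambda>s. \<kappa> s * P' t s)) (at t)"
    by (rule F1_deriv)
  have g: "g0 \<kappa> = gg" by (simp add: g0_def gg_def)
  have kc: "integral {0..} (\<lambda>s. - \<kappa>' s) = Kc" by (simp add: Kc_def)
  have th: "(L2norm (\<lambda>x. theta x t))^2 = nTh" unfolding nTh_def by (rule L2sq) (intro continuous_intros)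
  have ph: "(L2norm (\<lambda>x. dt phi x t))^2 = nPh" unfolding nPh_def by (rule L2sq) (intro continuous_intros)
  have ex: "(L2norm (\<lambda>x. dx (slice eta s) x t))^2 = nx s" for s unfolding nx_def by (rule L2sq) (intro continuous_intros)
  have vv: "Vnorm2 \<kappa> eta t = V" unfolding Vnorm2_def V_def ex ..
  have nn: "integral {0..} (\<lambda>s. \<kappa>' s * (L2norm (\<lambda>x. dx (slice eta s) x t))^2) = - N"
    unfolding ex N_def by simp
  define Mc where "Mc = beta^2 / (gg * \<delta>) + 3 / \<delta> + c * pi^2 * (Kc + 1) / gg^2"
  have gp: "gg > 0" by (rule gg_pos)
  have dp: "\<delta> > 0" by (rule dpos)
  have Nn: "N \<ge> 0" by (rule N_nonneg)
  have Vn: "V \<ge> 0" by (rule V_nonneg)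
  have VN: "V \<le> N / \<delta>" using I4 dp by (simp add: field_simps)
  define C3 where "C3 = c * pi^2 * (Kc + 1) / gg^2"
  have C3n: "C3 \<ge> 0" unfolding C3_def using cpos Kc_nonneg by simp
  have b2: "beta^2 / (gg * \<delta>) \<ge> 0" using gp dp by simp
  have x2: "(2 / gg) * X2 \<le> 2 * V"
  proof -
    have "(2 / gg) * X2 \<le> (2 / gg) * (gg * V)" using I2 gp by (intro mult_left_mono) auto
    then show ?thesis using gp by simp
  qed
  have Deq: "- (2 * c / g0 \<kappa>) * integral {0..} (\<lambda>s. \<kappa> s * P' t s) =
      - 2 * c * nTh + (- (2 * beta / gg) * X1) + (2 / gg) * X2 + (- (2 * c / gg) * X3)"
    using D_eq by (simp add: algebra_simps)
  have step1: "- (2 * c / g0 \<kappa>) * integral {0..} (\<lambda>s. \<kappa> s * P' t s) \<le>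
      - c * nTh + \<epsilon> * nPh + (beta^2 / (gg * \<epsilon>)) * V + 2 * V + C3 * N"
    using Deq I1[OF e] x2 I3 unfolding C3_def by linarith
  have t1: "(beta^2 / (gg * \<epsilon>)) * V \<le> (beta^2 / (gg * \<delta>)) * (N / \<epsilon>)"
  proof -
    have "(beta^2 / (gg * \<epsilon>)) * V \<le> (beta^2 / (gg * \<epsilon>)) * (N / \<delta>)"
      using VN gp e by (intro mult_left_mono) auto
    also have "\<dots> = (beta^2 / (gg * \<delta>)) * (N / \<epsilon>)" by (simp add: field_simps)
    finally show ?thesis .
  qed
  have t2: "3 * V \<le> (3 / \<delta>) * N" using VN by simp
  have m1: "(beta^2 / (gg * \<delta>)) * (N / \<epsilon>) \<le> Mc * (N / \<epsilon>)"
    unfolding Mc_def using Nn e dp C3n b2 unfolding C3_def by (intro mult_right_mono) auto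
  have m2: "(3 / \<delta> + C3) * N \<le> Mc * N"
    unfolding Mc_def C3_def using Nn b2 by (intro mult_right_mono) auto
  have m3: "Mc * (1 + 1 / \<epsilon>) * N = Mc * N + Mc * (N / \<epsilon>)" by (simp add: algebra_simps)
  have "- c * nTh + \<epsilon> * nPh + (beta^2 / (gg * \<epsilon>)) * V + 2 * V + C3 * N \<le>
        - c * nTh - V + \<epsilon> * nPh + Mc * (1 + 1 / \<epsilon>) * N"
    using t1 t2 m1 m2 m3 by (simp add: algebra_simps)
  with step1 have "- (2 * c / g0 \<kappa>) * integral {0..} (\<lambda>s. \<kappa> s * P' t s) \<le>
        - c * nTh - V + \<epsilon> * nPh + Mc * (1 + 1 / \<epsilon>) * N" by linarith
  then show "- (2 * c / g0 \<kappa>) * integral {0..} (\<lambda>s. \<kappa> s * P' t s) \<le> - c * (L2norm (\<lambda>x. theta x t))^2 - Vnorm2 \<kappa> eta t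
                   + \<epsilon> * (L2norm (\<lambda>x. dt phi x t))^2
                   - (beta^2 / (g0 \<kappa> * \<delta>) + 3 / \<delta> + c * pi^2 * (integral {0..} (\<lambda>s. - \<kappa>' s) + 1) / (g0 \<kappa>)^2) * (1 + 1 / \<epsilon>) *
                     integral {0..} (\<lambda>s. \<kappa>' s * (L2norm (\<lambda>x. dx (slice eta s) x t))^2)"
    unfolding th ph vv nn g kc Mc_def[symmetric] by simp
qed

end


theorem lemma5:
  fixes rho J c mu b alpha xi beta :: real
    and kappa kappa' :: "real \<Rightarrow> real"
  assumes pos: "rho > 0" "J > 0" "c > 0" "mu > 0" "b > 0" "alpha > 0" "xi > 0"
    and coup: "mu * xi > b^2"
    and beta: "beta \<noteq> 0"
    and h1: "continuous_on {0..} kappa" "kappa integrable_on {0..}"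
    and h2: "\<And>s. s \<ge> 0 \<Longrightarrow> kappa s > 0"
    and kderiv: "\<And>s. s \<ge> 0 \<Longrightarrow> (kappa has_real_derivative kappa' s) (at s within {0..})"
    and kcont: "continuous_on {0..} kappa'"
    and h2': "\<And>s. s \<ge> 0 \<Longrightarrow> kappa' s \<le> 0"
    and h4: "\<exists>\<delta>>0. \<forall>s\<ge>0. kappa' s \<le> - \<delta> * kappa s"
  shows "\<exists>M>0. \<forall>u phi theta eta.
           is_solution rho J c mu b alpha xi beta kappa u phi theta eta \<longrightarrow>
           (\<forall>\<epsilon>1>0. \<forall>t>0. \<exists>D. (F1 c kappa theta eta has_real_derivative D) (at t) \<and>
              D \<le> - c * (L2norm (\<lambda>x. theta x t))^2 - Vnorm2 kappa eta t
                   + \<epsilon>1 * (L2norm (\<lambda>x. dt phi x t))^2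
                   - M * (1 + 1 / \<epsilon>1) *
                     integral {0..} (\<lambda>s. kappa' s * (L2norm (\<lambda>x. dx (slice eta s) x t))^2))"
  proof -
  obtain \<delta> where dp: "\<delta> > 0" and kdec: "\<forall>s\<ge>0. kappa' s \<le> - \<delta> * kappa s" using h4 by blast
  interpret kap kappa kappa' \<delta>
  proof
    show "continuous_on {0..} kappa" by (rule h1(1))
    show "(kappa has_real_derivative kappa' s) (at s within {0..})" if "s \<ge> 0" for s using kderiv that by blast
    show "continuous_on {0..} kappa'" by (rule kcont)
    show "kappa s > 0" if "s \<ge> 0" for s using h2 that by blast
    show "\<delta> > 0" by (rule dp)
    show "kappa' s \<le> - \<delta> * kappa s" if "s \<ge> 0" for s using kdec that by blast
  qed
  define M where "M = beta^2 / (g0 kappa * \<delta>) + 3 / \<delta> + c * pi^2 * (integral {0..} (\<lambda>s. - kappa' s) + 1) / (g0 kappa)^2"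
  have Kc0: "integral {0..} (\<lambda>s. - kappa' s) \<ge> 0"
  proof (rule integral_nonneg[OF kd_int0])
    fix s :: real assume "s \<in> {0..}"
    then show "0 \<le> - kappa' s" using kd_nonpos[of s] by simp
  qed
  have "M > 0"
  proof -
    have "beta^2 / (g0 kappa * \<delta>) \<ge> 0" using g0_pos dp unfolding g0_def by simp
    moreover have "3 / \<delta> > 0" using dp by simp
    moreover have "c * pi^2 * (integral {0..} (\<lambda>s. - kappa' s) + 1) / (g0 kappa)^2 \<ge> 0"
      using pos(3) Kc0 by simp
    ultimately show ?thesis unfolding M_def by linarith
  qed
  moreover have "\<forall>u phi theta eta.
           is_solution rho J c mu b alpha xi beta kappa u phi theta eta \<longrightarrow>
           (\<forall>\<epsilon>1>0. \<forall>t>0. \<exists>D. (F1 c kappa theta eta has_real_derivative D) (at t) \<and>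
              D \<le> - c * (L2norm (\<lambda>x. theta x t))^2 - Vnorm2 kappa eta t
                   + \<epsilon>1 * (L2norm (\<lambda>x. dt phi x t))^2
                   - M * (1 + 1 / \<epsilon>1) *
                     integral {0..} (\<lambda>s. kappa' s * (L2norm (\<lambda>x. dx (slice eta s) x t))^2))"
  proof (intro allI impI)
    fix u phi theta :: "real \<Rightarrow> real \<Rightarrow> real" and eta :: "real \<Rightarrow> real \<Rightarrow> real \<Rightarrow> real" and \<epsilon>1 t :: real
    assume sol: "is_solution rho J c mu b alpha xi beta kappa u phi theta eta"
      and e: "\<epsilon>1 > 0" and tp: "t > 0"
    interpret setting kappa kappa' \<delta> rho J c mu b alpha xi beta u phi theta eta t
      by unfold_locales (use pos(3) sol tp in auto)
    show "\<exists>D. (F1 c kappa theta eta has_real_derivative D) (at t) \<and>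
              D \<le> - c * (L2norm (\<lambda>x. theta x t))^2 - Vnorm2 kappa eta t
                   + \<epsilon>1 * (L2norm (\<lambda>x. dt phi x t))^2
                   - M * (1 + 1 / \<epsilon>1) *
                     integral {0..} (\<lambda>s. kappa' s * (L2norm (\<lambda>x. dx (slice eta s) x t))^2)"
      unfolding M_def by (rule main[OF e])
  qed
  ultimately show ?thesis by blast
qed

end
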